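(* Let $l_1(\Gamma, \alpha, \mathcal{A})$ be the set of all families $a = \{a_g\}_{g \in \Gamma}$ of elements of $\mathcal{A}$ such that $a_x \in \mathcal{A}\alpha_x(1)$ and $a_{-x} \in \alpha_x(1)\mathcal{A}$ for all $x \in \Gamma^+$, and $\sum_{g \in \Gamma} \|a_g\| < \infty$, with norm $\|a\| = \sum_{g}\|a_g\|$, pointwise addition and scalar multiplication, involution $(a^* )_g := a_{-g}^*$, and multiplication $$(a \cdot b)_g := \begin{cases} \sum_{\substack{g=x-y \\ x,y>0}} a_x \alpha_{x-y}(b_{-y}) + \sum_{\substack{g=y-x \\ x,y>0}} L_x(a_{-x} b_y) + \sum_{\substack{g=x+y \\ x,y \geq 0}} a_x \alpha_x(b_y), & \text{if } 0 \leq g, \\ \sum_{\substack{g=x-y \\ x,y>0}} \alpha_{y-x}(a_x) b_{-y} + \sum_{\substack{g=y-x \\ x,y>0}} L_y(a_{-x} b_y) + \sum_{\substack{g=-x-y \\ x,y \geq 0}} \alpha_y(a_{-x}) b_{-y}, & \text{if } g < 0, \end{cases}$$ where $x,y$ run through $\Gamma^+$. Then $l_1(\Gamma, \alpha, \mathcal{A})$ with these operations is a unital Banach *-algebra (with unit $1\delta_0$, the family equal to $1$ at $g=0$ and $0$ elsewhere).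
   Context: $\mathcal{A}$ is a C*-algebra with identity $1$, $\Gamma$ is a totally ordered abelian group with identity $0$ and positive cone $\Gamma^+ = \{x \in \Gamma: 0 \le x\}$, and $\alpha: \Gamma^+ \to \mathrm{End}(\mathcal{A})$ is a semigroup homomorphism ($\alpha_0 = \mathrm{Id}$, $\alpha_x\circ\alpha_y = \alpha_{x+y}$) by *-endomorphisms. The system $(\mathcal{A}, \Gamma^+, \alpha)$ is assumed finely representable, equivalently there is a (unique) complete transfer action $L$: continuous linear positive maps $L_x:\mathcal{A}\to\mathcal{A}$, $x\in\Gamma^+$, with $L_{x+y} = L_y \circ L_x$, $L_x(\alpha_x(a)b) = aL_x(b)$ and $\alpha_x(L_x(a)) = \alpha_x(1)a\alpha_x(1)$ for all $a,b\in\mathcal{A}$, $x,y\in\Gamma^+$. *)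

theory Defs
  imports "HOL-Analysis.Analysis"
begin

text \<open>The library has no class of complex normed algebras, so the complex
structure of the algebra is given by an explicit scalar multiplication sc
that extends the real scalar multiplication.\<close>

definition complex_scaling :: "(complex \<Rightarrow> 'a::real_normed_algebra_1 \<Rightarrow> 'a) \<Rightarrow> bool" where
  "complex_scaling sc \<longleftrightarrow>
     (\<forall>r a. sc (complex_of_real r) a = r *\<^sub>R a) \<and>
     (\<forall>c d a. sc (c + d) a = sc c a + sc d a) \<and>
     (\<forall>c a b. sc c (a + b) = sc c a + sc c b) \<and>
     (\<forall>c d a. sc (c * d) a = sc c (sc d a)) \<and>
     (\<forall>c a. norm (sc c a) = cmod c * norm a) \<and>
     (\<forall>c a b. sc c (a * b) = sc c a * b \<and> sc c (a * b) = a * sc c b)"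

definition cstar_algebra ::
  "(complex \<Rightarrow> 'a::{real_normed_algebra_1,banach} \<Rightarrow> 'a) \<Rightarrow> ('a \<Rightarrow> 'a) \<Rightarrow> bool" where
  "cstar_algebra sc st \<longleftrightarrow>
     complex_scaling sc \<and>
     (\<forall>a b. st (a + b) = st a + st b) \<and>
     (\<forall>c a. st (sc c a) = sc (cnj c) (st a)) \<and>
     (\<forall>a b. st (a * b) = st b * st a) \<and>
     (\<forall>a. st (st a) = a) \<and>
     (\<forall>a. norm (st a * a) = (norm a)\<^sup>2)"

definition positive_el :: "('a::real_normed_algebra_1 \<Rightarrow> 'a) \<Rightarrow> 'a \<Rightarrow> bool" where
  "positive_el st a \<longleftrightarrow> (\<exists>b. a = st b * b)"

definition complex_linear :: "(complex \<Rightarrow> 'a \<Rightarrow> 'a) \<Rightarrow> ('a::real_normed_algebra_1 \<Rightarrow> 'a) \<Rightarrow> bool" where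
  "complex_linear sc f \<longleftrightarrow> (\<forall>a b. f (a + b) = f a + f b) \<and> (\<forall>c a. f (sc c a) = sc c (f a))"

definition star_endomorphism ::
  "(complex \<Rightarrow> 'a \<Rightarrow> 'a) \<Rightarrow> ('a \<Rightarrow> 'a) \<Rightarrow> ('a::real_normed_algebra_1 \<Rightarrow> 'a) \<Rightarrow> bool" where
  "star_endomorphism sc st f \<longleftrightarrow> complex_linear sc f \<and>
     (\<forall>a b. f (a * b) = f a * f b) \<and> (\<forall>a. f (st a) = st (f a))"

definition endo_semigroup ::
  "(complex \<Rightarrow> 'a \<Rightarrow> 'a) \<Rightarrow> ('a \<Rightarrow> 'a) \<Rightarrow> ('g::linordered_ab_group_add \<Rightarrow> 'a::real_normed_algebra_1 \<Rightarrow> 'a) \<Rightarrow> bool" where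
  "endo_semigroup sc st \<alpha> \<longleftrightarrow>
     (\<forall>x\<ge>0. star_endomorphism sc st (\<alpha> x)) \<and>
     \<alpha> 0 = id \<and>
     (\<forall>x\<ge>0. \<forall>y\<ge>0. \<alpha> x \<circ> \<alpha> y = \<alpha> (x + y))"

definition complete_transfer_action ::
  "(complex \<Rightarrow> 'a \<Rightarrow> 'a) \<Rightarrow> ('a \<Rightarrow> 'a) \<Rightarrow> ('g::linordered_ab_group_add \<Rightarrow> 'a \<Rightarrow> 'a)
     \<Rightarrow> ('g \<Rightarrow> 'a::real_normed_algebra_1 \<Rightarrow> 'a) \<Rightarrow> bool" where
  "complete_transfer_action sc st \<alpha> L \<longleftrightarrow>
     (\<forall>x\<ge>0. continuous_on UNIV (L x) \<and> complex_linear sc (L x) \<and>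
             (\<forall>a. positive_el st a \<longrightarrow> positive_el st (L x a))) \<and>
     (\<forall>x\<ge>0. \<forall>y\<ge>0. L (x + y) = L y \<circ> L x) \<and>
     (\<forall>x\<ge>0. \<forall>a b. L x (\<alpha> x a * b) = a * L x b) \<and>
     (\<forall>x\<ge>0. \<forall>a. \<alpha> x (L x a) = \<alpha> x 1 * a * \<alpha> x 1)"

definition l1_set :: "('g::linordered_ab_group_add \<Rightarrow> 'a \<Rightarrow> 'a) \<Rightarrow> ('g \<Rightarrow> 'a::{real_normed_algebra_1,banach}) set" where
  "l1_set \<alpha> = {a. (\<forall>x\<ge>0. a x \<in> {c * \<alpha> x 1 | c. True} \<and> a (-x) \<in> {\<alpha> x 1 * c | c. True})
                  \<and> (\<lambda>g. norm (a g)) summable_on UNIV}"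

definition l1_norm :: "('g \<Rightarrow> 'a::real_normed_vector) \<Rightarrow> real" where
  "l1_norm a = infsum (\<lambda>g. norm (a g)) UNIV"

definition l1_add :: "('g \<Rightarrow> 'a::real_normed_vector) \<Rightarrow> ('g \<Rightarrow> 'a) \<Rightarrow> ('g \<Rightarrow> 'a)" where
  "l1_add a b = (\<lambda>g. a g + b g)"

definition l1_zero :: "'g \<Rightarrow> 'a::real_normed_vector" where
  "l1_zero = (\<lambda>g. 0)"

definition l1_scale :: "(complex \<Rightarrow> 'a \<Rightarrow> 'a) \<Rightarrow> complex \<Rightarrow> ('g \<Rightarrow> 'a) \<Rightarrow> ('g \<Rightarrow> 'a)" where
  "l1_scale sc c a = (\<lambda>g. sc c (a g))"

definition l1_star :: "('a \<Rightarrow> 'a) \<Rightarrow> ('g::ab_group_add \<Rightarrow> 'a) \<Rightarrow> ('g \<Rightarrow> 'a)" where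
  "l1_star st a = (\<lambda>g. st (a (-g)))"

definition l1_unit :: "'g::zero \<Rightarrow> 'a::real_normed_algebra_1" where
  "l1_unit = (\<lambda>g. if g = 0 then 1 else 0)"

definition l1_mult ::
  "('g::linordered_ab_group_add \<Rightarrow> 'a \<Rightarrow> 'a) \<Rightarrow> ('g \<Rightarrow> 'a \<Rightarrow> 'a)
     \<Rightarrow> ('g \<Rightarrow> 'a::{real_normed_algebra_1,banach}) \<Rightarrow> ('g \<Rightarrow> 'a) \<Rightarrow> ('g \<Rightarrow> 'a)" where
  "l1_mult \<alpha> L a b = (\<lambda>g.
     if 0 \<le> g then
       infsum (\<lambda>(x,y). a x * \<alpha> (x - y) (b (-y))) {(x,y). 0 < x \<and> 0 < y \<and> g = x - y}
     + infsum (\<lambda>(x,y). L x (a (-x) * b y)) {(x,y). 0 < x \<and> 0 < y \<and> g = y - x}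
     + infsum (\<lambda>(x,y). a x * \<alpha> x (b y)) {(x,y). 0 \<le> x \<and> 0 \<le> y \<and> g = x + y}
     else
       infsum (\<lambda>(x,y). \<alpha> (y - x) (a x) * b (-y)) {(x,y). 0 < x \<and> 0 < y \<and> g = x - y}
     + infsum (\<lambda>(x,y). L y (a (-x) * b y)) {(x,y). 0 < x \<and> 0 < y \<and> g = y - x}
     + infsum (\<lambda>(x,y). \<alpha> y (a (-x)) * b (-y)) {(x,y). 0 \<le> x \<and> 0 \<le> y \<and> g = -x - y})"

definition unital_banach_star_algebra ::
  "'b set \<Rightarrow> ('b \<Rightarrow> 'b \<Rightarrow> 'b) \<Rightarrow> 'b \<Rightarrow> (complex \<Rightarrow> 'b \<Rightarrow> 'b) \<Rightarrow> ('b \<Rightarrow> 'b \<Rightarrow> 'b)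
     \<Rightarrow> ('b \<Rightarrow> 'b) \<Rightarrow> ('b \<Rightarrow> real) \<Rightarrow> 'b \<Rightarrow> bool" where
  "unital_banach_star_algebra S add zero sc mul st nrm one \<longleftrightarrow>
   \<comment> \<open>closure\<close>
   zero \<in> S \<and> one \<in> S \<and>
   (\<forall>a\<in>S. \<forall>b\<in>S. add a b \<in> S \<and> mul a b \<in> S) \<and>
   (\<forall>c. \<forall>a\<in>S. sc c a \<in> S) \<and> (\<forall>a\<in>S. st a \<in> S) \<and>
   \<comment> \<open>complex vector space\<close>
   (\<forall>a\<in>S. \<forall>b\<in>S. \<forall>d\<in>S. add (add a b) d = add a (add b d)) \<and>
   (\<forall>a\<in>S. \<forall>b\<in>S. add a b = add b a) \<and>
   (\<forall>a\<in>S. add zero a = a) \<and>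
   (\<forall>a\<in>S. add a (sc (-1) a) = zero) \<and>
   (\<forall>a\<in>S. sc 1 a = a) \<and>
   (\<forall>c d. \<forall>a\<in>S. sc (c * d) a = sc c (sc d a)) \<and>
   (\<forall>c d. \<forall>a\<in>S. sc (c + d) a = add (sc c a) (sc d a)) \<and>
   (\<forall>c. \<forall>a\<in>S. \<forall>b\<in>S. sc c (add a b) = add (sc c a) (sc c b)) \<and>
   \<comment> \<open>norm\<close>
   (\<forall>a\<in>S. 0 \<le> nrm a \<and> (nrm a = 0 \<longleftrightarrow> a = zero)) \<and>
   (\<forall>a\<in>S. \<forall>b\<in>S. nrm (add a b) \<le> nrm a + nrm b) \<and>
   (\<forall>c. \<forall>a\<in>S. nrm (sc c a) = cmod c * nrm a) \<and>
   \<comment> \<open>completeness\<close>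
   (\<forall>f. (\<forall>n. f n \<in> S) \<longrightarrow>
        (\<forall>e>0. \<exists>N. \<forall>m\<ge>N. \<forall>n\<ge>N. nrm (add (f m) (sc (-1) (f n))) < e) \<longrightarrow>
        (\<exists>l\<in>S. (\<lambda>n. nrm (add (f n) (sc (-1) l))) \<longlonglongrightarrow> 0)) \<and>
   \<comment> \<open>Banach algebra\<close>
   (\<forall>a\<in>S. \<forall>b\<in>S. \<forall>d\<in>S. mul (mul a b) d = mul a (mul b d)) \<and>
   (\<forall>a\<in>S. \<forall>b\<in>S. \<forall>d\<in>S. mul a (add b d) = add (mul a b) (mul a d)) \<and>
   (\<forall>a\<in>S. \<forall>b\<in>S. \<forall>d\<in>S. mul (add a b) d = add (mul a d) (mul b d)) \<and>
   (\<forall>c. \<forall>a\<in>S. \<forall>b\<in>S. sc c (mul a b) = mul (sc c a) b \<and> sc c (mul a b) = mul a (sc c b)) \<and>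
   (\<forall>a\<in>S. \<forall>b\<in>S. nrm (mul a b) \<le> nrm a * nrm b) \<and>
   \<comment> \<open>unit\<close>
   (\<forall>a\<in>S. mul one a = a \<and> mul a one = a) \<and> nrm one = 1 \<and>
   \<comment> \<open>isometric involution\<close>
   (\<forall>a\<in>S. \<forall>b\<in>S. st (add a b) = add (st a) (st b)) \<and>
   (\<forall>c. \<forall>a\<in>S. st (sc c a) = sc (cnj c) (st a)) \<and>
   (\<forall>a\<in>S. \<forall>b\<in>S. st (mul a b) = mul (st b) (st a)) \<and>
   (\<forall>a\<in>S. st (st a) = a) \<and>
   (\<forall>a\<in>S. nrm (st a) = nrm a)"

end

theory Submission
  imports Defs "HOL-Computational_Algebra.Formal_Power_Series"
begin


section \<open>Square root series\<close>

definition sqc :: "nat \<Rightarrow> real" where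
  "sqc n = (-1)^n * ((1/2::real) gchoose n)"

lemma sqc_bound: "\<bar>sqc n\<bar> \<le> 1"
proof -
  have "\<bar>(1/2::real) gchoose n\<bar> \<le> 1"
  proof (induction n)
    case 0 then show ?case by simp
  next
    case (Suc n)
    have "of_nat (Suc n) * ((1/2::real) gchoose Suc n) = (1/2 - of_nat n) * ((1/2) gchoose n)"
      using gbinomial_absorption[of n "1/2::real"] gbinomial_absorb_comp[of "1/2::real" n] by simp
    then have "(1/2::real) gchoose Suc n = ((1/2) gchoose n) * ((1/2 - of_nat n) / of_nat (Suc n))"
      by (simp add: field_simps del: of_nat_Suc)
    moreover have "\<bar>(1/2 - of_nat n) / of_nat (Suc n)\<bar> \<le> (1::real)"
      by (auto simp: abs_if field_simps)
    ultimately show ?case using Suc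
      by (metis abs_ge_zero abs_mult mult_le_one)
  qed
  then show ?thesis by (simp add: sqc_def abs_mult)
qed

lemma sqc_conv: "(\<Sum>i\<le>n. sqc i * sqc (n - i)) = (if n = 0 then 1 else if n = 1 then -1 else 0)"
proof -
  have "(\<Sum>i\<le>n. sqc i * sqc (n - i)) = (-1)^n * (\<Sum>i\<le>n. ((1/2::real) gchoose i) * ((1/2) gchoose (n - i)))"
    unfolding sum_distrib_left sqc_def
    by (intro sum.cong refl) (auto simp: power_add[symmetric])
  also have "(\<Sum>i\<le>n. ((1/2::real) gchoose i) * ((1/2) gchoose (n - i))) = (1::real) gchoose n"
    using gbinomial_Vandermonde[of "1/2::real" "1/2" n] by (simp add: atMost_atLeast0)
  also have "(1::real) gchoose n = of_nat (1 choose n)"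
    using binomial_gbinomial[of 1 n] by (metis of_nat_1)
  finally show ?thesis
    by (cases n; cases "n - 1") (auto simp: binomial_eq_0)
qed

lemma sqrt_series:
  fixes k :: "'a::{real_normed_algebra_1,banach}"
  assumes k: "norm k < 1"
  shows "summable (\<lambda>n. norm (sqc n *\<^sub>R k^n))"
    and "(\<Sum>n. sqc n *\<^sub>R k^n) * (\<Sum>n. sqc n *\<^sub>R k^n) = 1 - k"
proof -
  have b: "norm (sqc n *\<^sub>R k^n) \<le> norm k ^ n" for n
  proof -
    have "norm (sqc n *\<^sub>R k^n) = \<bar>sqc n\<bar> * norm (k^n)" by simp
    also have "\<dots> \<le> 1 * norm k ^ n"
      by (intro mult_mono sqc_bound norm_power_ineq) auto
    finally show ?thesis by simp
  qed
  show s: "summable (\<lambda>n. norm (sqc n *\<^sub>R k^n))"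
    by (rule summable_comparison_test'[where g="\<lambda>n. norm k ^ n"])
       (use b k in \<open>auto intro!: summable_geometric\<close>)
  have "(\<Sum>n. sqc n *\<^sub>R k^n) * (\<Sum>n. sqc n *\<^sub>R k^n)
      = (\<Sum>n. \<Sum>i\<le>n. (sqc i *\<^sub>R k^i) * (sqc (n - i) *\<^sub>R k^(n - i)))"
    by (rule Cauchy_product[OF s s])
  also have "\<dots> = (\<Sum>n. (if n = 0 then 1 else if n = 1 then -1 else 0) *\<^sub>R k^n)"
  proof (rule suminf_cong)
    fix n
    have "(\<Sum>i\<le>n. (sqc i *\<^sub>R k^i) * (sqc (n - i) *\<^sub>R k^(n - i)))
        = (\<Sum>i\<le>n. (sqc i * sqc (n - i)) *\<^sub>R k^n)"
    proof (rule sum.cong[OF refl])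
      fix i assume "i \<in> {..n}"
      then have "k^i * k^(n-i) = k^n" by (simp add: power_add[symmetric])
      then show "(sqc i *\<^sub>R k^i) * (sqc (n - i) *\<^sub>R k^(n - i)) = (sqc i * sqc (n - i)) *\<^sub>R k^n"
        by (simp add: mult.commute)
    qed
    also have "\<dots> = (\<Sum>i\<le>n. sqc i * sqc (n - i)) *\<^sub>R k^n"
      by (simp add: scaleR_sum_left)
    finally show "(\<Sum>i\<le>n. (sqc i *\<^sub>R k^i) * (sqc (n - i) *\<^sub>R k^(n - i)))
        = (if n = 0 then 1 else if n = 1 then -1 else 0) *\<^sub>R k^n"
      by (simp add: sqc_conv)
  qed
  also have "\<dots> = (\<Sum>n\<in>{0,1}. (if n = 0 then 1 else if n = 1 then -1 else 0) *\<^sub>R k^n)"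
    by (rule suminf_finite) auto
  also have "\<dots> = 1 - k" by simp
  finally show "(\<Sum>n. sqc n *\<^sub>R k^n) * (\<Sum>n. sqc n *\<^sub>R k^n) = 1 - k" .
qed




locale l1ctx =
  fixes sc :: "complex \<Rightarrow> 'a::{real_normed_algebra_1,banach} \<Rightarrow> 'a"
    and st :: "'a \<Rightarrow> 'a"
    and \<alpha> :: "'g::linordered_ab_group_add \<Rightarrow> 'a \<Rightarrow> 'a"
    and L :: "'g \<Rightarrow> 'a \<Rightarrow> 'a"
  assumes CS: "cstar_algebra sc st"
    and ES: "endo_semigroup sc st \<alpha>"
    and CT: "complete_transfer_action sc st \<alpha> L"
begin

lemma sc_real: "sc (complex_of_real r) a = r *\<^sub>R a"
  and sc_add1: "sc (c + d) a = sc c a + sc d a"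
  and sc_add2: "sc c (a + b) = sc c a + sc c b"
  and sc_mult: "sc (c * d) a = sc c (sc d a)"
  and sc_norm: "norm (sc c a) = cmod c * norm a"
  using CS unfolding cstar_algebra_def complex_scaling_def by auto

lemma sc_multl: "sc c (a * b) = sc c a * b"
  and sc_multr: "sc c (a * b) = a * sc c b"
  using CS unfolding cstar_algebra_def complex_scaling_def by blast+

lemma st_add: "st (a + b) = st a + st b"
  and st_sc: "st (sc c a) = sc (cnj c) (st a)"
  and st_mult: "st (a * b) = st b * st a"
  and st_st[simp]: "st (st a) = a"
  and cstar: "norm (st a * a) = (norm a)\<^sup>2"
  using CS unfolding cstar_algebra_def by auto

lemma sc_one[simp]: "sc 1 a = a"
  using sc_real[of 1 a] by simp

lemma sc_zero[simp]: "sc 0 a = 0"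
  using sc_real[of 0 a] by simp

lemma sc_minus_one: "sc (-1) a = - a"
  using sc_real[of "-1" a] by simp

lemma sc_0[simp]: "sc c 0 = 0"
  using sc_add2[of c 0 0] by simp

lemma sc_minus: "sc c (- a) = - sc c a"
  using sc_add2[of c a "-a"] by (simp add: add_eq_0_iff)

lemma sc_diff: "sc c (a - b) = sc c a - sc c b"
  using sc_add2[of c a "-b"] sc_minus[of c b] by simp

lemma sc_scaleR: "sc c (r *\<^sub>R a) = r *\<^sub>R sc c a"
proof -
  have "sc c (r *\<^sub>R a) = sc (c * complex_of_real r) a" by (simp add: sc_mult sc_real)
  also have "\<dots> = sc (complex_of_real r * c) a" by (simp add: mult.commute)
  also have "\<dots> = r *\<^sub>R sc c a" by (simp add: sc_mult sc_real)
  finally show ?thesis .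
qed

lemma bl_sc: "bounded_linear (sc c)"
  by (rule bounded_linear_intro[where K="cmod c"]) (auto simp: sc_add2 sc_scaleR sc_norm mult.commute)

lemma sc_sum: "sc c (sum f A) = (\<Sum>x\<in>A. sc c (f x))"
  by (induction A rule: infinite_finite_induct) (auto simp: sc_add2)

lemma st_0[simp]: "st 0 = 0"
  using st_add[of 0 0] by simp

lemma st_minus: "st (- a) = - st a"
  using st_add[of a "-a"] by (simp add: add_eq_0_iff)

lemma st_diff: "st (a - b) = st a - st b"
  using st_add[of a "-b"] st_minus[of b] by simp

lemma st_scaleR: "st (r *\<^sub>R a) = r *\<^sub>R st a"
  using st_sc[of "complex_of_real r" a] by (simp add: sc_real)

lemma st_one[simp]: "st 1 = 1"
proof -
  have "st (st 1 * 1) = st 1 * st (st 1)" by (rule st_mult)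
  then show ?thesis by simp
qed

lemma norm_st_le: "norm a \<le> norm (st a)"
proof (cases "a = 0")
  case False
  have "(norm a)\<^sup>2 \<le> norm (st a) * norm a" using cstar[of a] norm_mult_ineq[of "st a" a] by simp
  then show ?thesis using False by (simp add: power2_eq_square)
qed simp

lemma norm_st[simp]: "norm (st a) = norm a"
  using norm_st_le[of a] norm_st_le[of "st a"] by simp

lemma bl_st: "bounded_linear st"
  by (rule bounded_linear_intro[where K=1]) (auto simp: st_add st_scaleR)

lemma st_sum: "st (sum f A) = (\<Sum>x\<in>A. st (f x))"
  by (induction A rule: infinite_finite_induct) (auto simp: st_add)

lemma st_power: "st (a ^ n) = st a ^ n"
  by (induction n) (auto simp: st_mult power_commutes)

lemma norm_sa_sq: "st h = h \<Longrightarrow> norm (h * h) = (norm h)\<^sup>2"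
  using cstar[of h] by simp

lemma norm_sa_pow2: "st h = h \<Longrightarrow> norm (h ^ (2^n)) = norm h ^ (2^n)"
proof (induction n)
  case (Suc n)
  have "h ^ (2 ^ Suc n) = h^(2^n) * h^(2^n)" by (simp add: power_add[symmetric] mult_2)
  moreover have "st (h^(2^n)) = h^(2^n)" using Suc.prems by (simp add: st_power)
  ultimately have "norm (h ^ (2 ^ Suc n)) = (norm (h^(2^n)))\<^sup>2" using norm_sa_sq by simp
  then show ?case using Suc by (simp add: power_mult[symmetric] mult.commute)
qed simp

lemma proj_norm_le: "st p = p \<Longrightarrow> p * p = p \<Longrightarrow> norm p \<le> 1"
  using norm_sa_sq[of p] by (cases "norm p = 0") (auto simp: power2_eq_square)

lemma alpha_props:
  assumes "0 \<le> x"
  shows "\<alpha> x (a + b) = \<alpha> x a + \<alpha> x b" and "\<alpha> x (sc c a) = sc c (\<alpha> x a)"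
    and "\<alpha> x (a * b) = \<alpha> x a * \<alpha> x b" and "\<alpha> x (st a) = st (\<alpha> x a)"
  using ES assms unfolding endo_semigroup_def star_endomorphism_def complex_linear_def by auto

lemma alpha_0[simp]: "\<alpha> 0 a = a"
  using ES unfolding endo_semigroup_def by simp

lemma alpha_comp: "0 \<le> x \<Longrightarrow> 0 \<le> y \<Longrightarrow> \<alpha> x (\<alpha> y a) = \<alpha> (x + y) a"
  using ES unfolding endo_semigroup_def by (metis comp_apply)

lemma alpha_add: "0 \<le> x \<Longrightarrow> \<alpha> x (a + b) = \<alpha> x a + \<alpha> x b"
  and alpha_sc: "0 \<le> x \<Longrightarrow> \<alpha> x (sc c a) = sc c (\<alpha> x a)"
  and alpha_mult: "0 \<le> x \<Longrightarrow> \<alpha> x (a * b) = \<alpha> x a * \<alpha> x b"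
  and alpha_st: "0 \<le> x \<Longrightarrow> \<alpha> x (st a) = st (\<alpha> x a)"
  using alpha_props by auto

lemma alpha_zero[simp]: "0 \<le> x \<Longrightarrow> \<alpha> x 0 = 0"
  using alpha_add[of x 0 0] by simp

lemma alpha_minus: "0 \<le> x \<Longrightarrow> \<alpha> x (- a) = - \<alpha> x a"
  using alpha_add[of x a "-a"] by (simp add: add_eq_0_iff)

lemma alpha_diff: "0 \<le> x \<Longrightarrow> \<alpha> x (a - b) = \<alpha> x a - \<alpha> x b"
  using alpha_add[of x a "-b"] alpha_minus[of x b] by simp

lemma alpha_scaleR: "0 \<le> x \<Longrightarrow> \<alpha> x (r *\<^sub>R a) = r *\<^sub>R \<alpha> x a"
  using alpha_sc[of x "complex_of_real r" a] by (simp add: sc_real)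

lemma alpha_power: "0 \<le> x \<Longrightarrow> \<alpha> x (a ^ Suc n) = \<alpha> x a ^ Suc n"
  by (induction n) (auto simp: alpha_mult)

lemma alpha_p_left: "0 \<le> x \<Longrightarrow> \<alpha> x 1 * \<alpha> x a = \<alpha> x a"
  using alpha_mult[of x 1 a] by simp

lemma alpha_p_right: "0 \<le> x \<Longrightarrow> \<alpha> x a * \<alpha> x 1 = \<alpha> x a"
  using alpha_mult[of x a 1] by simp

lemma p_idem: "0 \<le> x \<Longrightarrow> \<alpha> x 1 * \<alpha> x 1 = \<alpha> x 1"
  using alpha_p_left[of x 1] by simp

lemma p_sa: "0 \<le> x \<Longrightarrow> st (\<alpha> x 1) = \<alpha> x 1"
  using alpha_st[of x 1] by simp

lemma p_norm: "0 \<le> x \<Longrightarrow> norm (\<alpha> x 1) \<le> 1"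
  using proj_norm_le p_sa p_idem by blast

end




context l1ctx
begin

lemma sc_neg_i: "sc (- \<i>) z = - sc \<i> z"
  using sc_mult[of "-1" "\<i>" z] by (simp add: sc_minus_one)

lemma sc_i_negi: "sc \<i> (sc (- \<i>) z) = z"
  using sc_mult[of "\<i>" "- \<i>" z] by simp

lemma alpha_sa_le1:
  assumes x: "0 \<le> x" and h: "st h = h" and n: "norm h < 1"
  shows "norm (\<alpha> x h) \<le> 1"
proof -
  define k where "k = h * h"
  have nk: "norm k < 1"
  proof -
    have "norm h * norm h \<le> norm h * 1" by (rule mult_left_mono) (use n in auto)
    then show ?thesis unfolding k_def using norm_sa_sq[OF h] n by (simp add: power2_eq_square)
  qed
  define s where "s = (\<Sum>n. sqc n *\<^sub>R k^n)"
  have sumn: "summable (\<lambda>n. norm (sqc n *\<^sub>R k^n))" using sqrt_series(1)[OF nk] .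
  have sum: "summable (\<lambda>n. sqc n *\<^sub>R k^n)" using summable_norm_cancel[OF sumn] .
  have ss: "s * s = 1 - k" unfolding s_def using sqrt_series(2)[OF nk] .
  have hk: "h * k^n = k^n * h" for n
    unfolding k_def by (simp add: power2_eq_square[symmetric] power_mult[symmetric] power_commutes)
  have hs: "h * s = s * h"
  proof -
    have "h * s = (\<Sum>n. h * (sqc n *\<^sub>R k^n))" unfolding s_def using suminf_mult[OF sum, of h] by simp
    also have "\<dots> = (\<Sum>n. (sqc n *\<^sub>R k^n) * h)" by (simp add: hk)
    also have "\<dots> = s * h" unfolding s_def using suminf_mult2[OF sum, of h] by simp
    finally show ?thesis .
  qed
  have stk: "st k = k" unfolding k_def by (simp add: st_mult h)
  have sts: "st s = s"
  proof -
    have "st s = (\<Sum>n. st (sqc n *\<^sub>R k^n))" unfolding s_def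
      using bounded_linear.suminf[OF bl_st sum] by simp
    also have "\<dots> = s" unfolding s_def by (simp add: st_scaleR st_power stk)
    finally show ?thesis .
  qed
  define A where "A = \<alpha> x h"
  define S where "S = \<alpha> x s"
  have AS: "A * S = S * A" unfolding A_def S_def using hs by (simp add: alpha_mult[OF x, symmetric])
  have stA: "st A = A" unfolding A_def using h by (simp add: alpha_st[OF x, symmetric])
  have stS: "st S = S" unfolding S_def using sts by (simp add: alpha_st[OF x, symmetric])
  have AASS: "A * A + S * S = \<alpha> x 1"
    unfolding A_def S_def by (simp add: alpha_mult[OF x, symmetric] alpha_add[OF x, symmetric] ss k_def)
  define w where "w = A + sc \<i> S"
  have stw: "st w = A + sc (- \<i>) S" unfolding w_def by (simp add: st_add st_sc stA stS)
  have "(A + sc (- \<i>) S) * (A + sc \<i> S) = A * A + sc \<i> (A * S) + sc (- \<i>) (S * A) + S * S"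
    by (simp add: distrib_left distrib_right sc_multl[symmetric] sc_multr[symmetric] add.assoc sc_add2 sc_i_negi)
  also have "\<dots> = A * A + S * S" using AS by (simp add: sc_neg_i)
  finally have "st w * w = \<alpha> x 1" using AASS unfolding stw by (simp add: w_def)
  then have "(norm w)\<^sup>2 \<le> 1" using cstar[of w] p_norm[OF x] by simp
  then have nw: "norm w \<le> 1" by (simp add: power_le_one_iff)
  have "w + st w = A + A + (sc \<i> S + sc (- \<i>) S)" unfolding stw by (simp add: w_def)
  then have "w + st w = 2 *\<^sub>R A" by (simp add: sc_neg_i scaleR_2)
  then have "2 * norm A \<le> norm w + norm (st w)"
    by (metis norm_scaleR norm_triangle_ineq abs_numeral)
  then show ?thesis using nw unfolding A_def by simp
qed

lemma alpha_sa_le: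
  assumes x: "0 \<le> x" and h: "st h = h"
  shows "norm (\<alpha> x h) \<le> norm h"
proof (rule dense_ge)
  fix t assume t: "norm h < t"
  then have t0: "0 < t" using norm_ge_zero[of h] by linarith
  have "norm (\<alpha> x ((1/t) *\<^sub>R h)) \<le> 1"
    by (rule alpha_sa_le1[OF x]) (use h t t0 in \<open>auto simp: st_scaleR field_simps\<close>)
  then have "norm (\<alpha> x h) / t \<le> 1" using t0 by (simp add: alpha_scaleR[OF x] divide_inverse mult.commute)
  then show "norm (\<alpha> x h) \<le> t" using t0 by (simp add: field_simps)
qed

lemma alpha_norm:
  assumes x: "0 \<le> x"
  shows "norm (\<alpha> x a) \<le> norm a"
proof -
  have "(norm (\<alpha> x a))\<^sup>2 = norm (\<alpha> x (st a * a))"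
    using cstar[of "\<alpha> x a"] by (simp add: alpha_mult[OF x] alpha_st[OF x])
  also have "\<dots> \<le> norm (st a * a)" by (rule alpha_sa_le[OF x]) (simp add: st_mult)
  also have "\<dots> = (norm a)\<^sup>2" by (rule cstar)
  finally show ?thesis by (rule power2_le_imp_le) simp
qed

lemma bl_alpha: "0 \<le> x \<Longrightarrow> bounded_linear (\<alpha> x)"
  by (rule bounded_linear_intro[where K=1]) (auto simp: alpha_add alpha_scaleR alpha_norm)

end




context l1ctx
begin

lemma L_props:
  assumes "0 \<le> x"
  shows "continuous_on UNIV (L x)" and "L x (a + b) = L x a + L x b" and "L x (sc c a) = sc c (L x a)"
    and "positive_el st a \<Longrightarrow> positive_el st (L x a)"
    and "L x (\<alpha> x a * b) = a * L x b" and "\<alpha> x (L x a) = \<alpha> x 1 * a * \<alpha> x 1"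
  using CT assms unfolding complete_transfer_action_def complex_linear_def by auto

lemma L_comp: "0 \<le> x \<Longrightarrow> 0 \<le> y \<Longrightarrow> L (x + y) a = L y (L x a)"
  using CT unfolding complete_transfer_action_def by (metis comp_apply)

lemma L_add: "0 \<le> x \<Longrightarrow> L x (a + b) = L x a + L x b"
  and L_sc: "0 \<le> x \<Longrightarrow> L x (sc c a) = sc c (L x a)"
  and L_mod: "0 \<le> x \<Longrightarrow> L x (\<alpha> x a * b) = a * L x b"
  and L_alpha: "0 \<le> x \<Longrightarrow> \<alpha> x (L x a) = \<alpha> x 1 * a * \<alpha> x 1"
  using L_props by auto

lemma L_zero[simp]: "0 \<le> x \<Longrightarrow> L x 0 = 0"
  using L_add[of x 0 0] by simp

lemma L_minus: "0 \<le> x \<Longrightarrow> L x (- a) = - L x a"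
  using L_add[of x a "-a"] by (simp add: add_eq_0_iff)

lemma L_diff: "0 \<le> x \<Longrightarrow> L x (a - b) = L x a - L x b"
  using L_add[of x a "-b"] L_minus[of x b] by simp

lemma L_scaleR: "0 \<le> x \<Longrightarrow> L x (r *\<^sub>R a) = r *\<^sub>R L x a"
  using L_sc[of x "complex_of_real r" a] by (simp add: sc_real)

lemma bl_L: assumes x: "0 \<le> x" shows "bounded_linear (L x)"
proof -
  have "continuous (at 0) (L x)" using L_props(1)[OF x] by (simp add: continuous_on_eq_continuous_at)
  then obtain d where d: "d > 0" and hd: "\<And>y. norm y < d \<Longrightarrow> norm (L x y) < 1"
    unfolding continuous_at_eps_delta using x by (auto simp: dist_norm) (metis zero_less_one)
  show ?thesis
  proof (rule bounded_linear_intro[where K="2 / d"])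
    fix y
    show "norm (L x y) \<le> norm y * (2 / d)"
    proof (cases "y = 0")
      case True then show ?thesis using x by simp
    next
      case False
      let ?t = "d / (2 * norm y)"
      have t0: "?t > 0" using False d by simp
      have "norm (?t *\<^sub>R y) < d" using False d by simp
      then have "norm (L x (?t *\<^sub>R y)) < 1" by (rule hd)
      then have "?t * norm (L x y) < 1" using t0 d by (simp add: L_scaleR[OF x])
      then show ?thesis using False d by (simp add: field_simps)
    qed
  qed (auto simp: L_add[OF x] L_scaleR[OF x])
qed

definition corner :: "'g \<Rightarrow> 'a \<Rightarrow> bool" where
  "corner x e \<longleftrightarrow> \<alpha> x 1 * e = e \<and> e * \<alpha> x 1 = e"

lemma L_one_sa: assumes x: "0 \<le> x" shows "st (L x 1) = L x 1"
proof -
  have "positive_el st (1::'a)" unfolding positive_el_def by (rule exI[of _ 1]) simp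
  then have "positive_el st (L x 1)" using L_props(4)[OF x] by blast
  then obtain b where "L x 1 = st b * b" unfolding positive_el_def by blast
  then show ?thesis by (simp add: st_mult)
qed

lemma alpha_L_one: "0 \<le> x \<Longrightarrow> \<alpha> x (L x 1) = \<alpha> x 1"
  using L_alpha[of x 1] p_idem[of x] by simp

lemma L_p: "0 \<le> x \<Longrightarrow> L x (\<alpha> x 1 * e) = L x e"
  using L_mod[of x 1 e] by simp

lemma alpha_L_corner: "0 \<le> x \<Longrightarrow> corner x e \<Longrightarrow> \<alpha> x (L x e) = e"
  using L_alpha[of x e] unfolding corner_def by simp

lemma q_L: "0 \<le> x \<Longrightarrow> L x 1 * L x e = L x e"
  using L_mod[of x "L x 1" e] alpha_L_one[of x] L_p[of x e] by simp

lemma L_st_corner: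
  assumes x: "0 \<le> x" and c: "corner x e"
  shows "st (L x e) = L x (st e)"
proof -
  have "st (L x e) = st (L x e) * L x 1"
    using arg_cong[OF q_L[OF x, of e], of st] by (simp add: st_mult L_one_sa[OF x])
  also have "\<dots> = L x (\<alpha> x (st (L x e)) * 1)" using L_mod[OF x, of "st (L x e)" 1] by simp
  also have "\<dots> = L x (st e)" by (simp add: alpha_st[OF x] alpha_L_corner[OF x c])
  finally show ?thesis .
qed

lemma L_sq_corner:
  assumes x: "0 \<le> x" and c: "corner x e"
  shows "st (L x e) * L x e = L x (st e * e)"
  using L_mod[OF x, of "st (L x e)" e] by (simp add: alpha_st[OF x] alpha_L_corner[OF x c])

lemma corner_st: "0 \<le> x \<Longrightarrow> corner x e \<Longrightarrow> corner x (st e)"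
  unfolding corner_def by (metis st_mult p_sa)

lemma corner_mult: "corner x e \<Longrightarrow> corner x f \<Longrightarrow> corner x (e * f)"
  unfolding corner_def by (metis mult.assoc)

lemma corner_pow2: "corner x e \<Longrightarrow> corner x (e ^ (2 ^ n))"
proof (induction n)
  case 0 then show ?case by simp
next
  case (Suc n)
  have "e ^ (2 ^ Suc n) = e^(2^n) * e^(2^n)" by (simp add: power_add[symmetric] mult_2)
  then show ?case using corner_mult[OF Suc.IH[OF Suc.prems] Suc.IH[OF Suc.prems]] by simp
qed

lemma L_pow2:
  assumes x: "0 \<le> x" and c: "corner x f" and sa: "st f = f"
  shows "L x (f ^ (2 ^ n)) = L x f ^ (2 ^ n)"
proof (induction n)
  case 0 then show ?case by simp
next
  case (Suc n)
  let ?g = "f ^ (2 ^ n)"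
  have cg: "corner x ?g" by (rule corner_pow2[OF c])
  have sg: "st ?g = ?g" by (simp add: st_power sa)
  have "f ^ (2 ^ Suc n) = ?g * ?g" by (simp add: power_add[symmetric] mult_2)
  then have "L x (f ^ (2 ^ Suc n)) = st (L x ?g) * L x ?g"
    using L_sq_corner[OF x cg] sg by simp
  also have "\<dots> = L x ?g * L x ?g" using L_st_corner[OF x cg] sg by simp
  also have "\<dots> = L x f ^ (2 ^ Suc n)" using Suc.IH by (simp add: power_add[symmetric] mult_2)
  finally show ?case .
qed

lemma L_sa_norm:
  assumes x: "0 \<le> x" and c: "corner x f" and sa: "st f = f"
  shows "norm (L x f) \<le> norm f"
proof (rule ccontr)
  assume "\<not> ?thesis"
  then have gt: "norm f < norm (L x f)" by simp
  obtain K where K: "K > 0" "\<And>y. norm (L x y) \<le> norm y * K"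
    using bounded_linear.pos_bounded[OF bl_L[OF x]] by blast
  have saL: "st (L x f) = L x f" using L_st_corner[OF x c] sa by simp
  have bnd: "norm (L x f) ^ (2^n) \<le> K * norm f ^ (2^n)" for n
  proof -
    have "norm (L x f) ^ (2^n) = norm (L x f ^ (2^n))" using norm_sa_pow2[OF saL] by simp
    also have "\<dots> = norm (L x (f ^ (2^n)))" using L_pow2[OF x c sa] by simp
    also have "\<dots> \<le> norm (f ^ (2^n)) * K" by (rule K(2))
    also have "\<dots> = K * norm f ^ (2^n)" using norm_sa_pow2[OF sa] by simp
    finally show ?thesis .
  qed
  show False
  proof (cases "norm f = 0")
    case True
    then have "f = 0" by simp
    then show False using gt x by simp
  next
    case False
    then have f0: "norm f > 0" by simp
    define r where "r = norm (L x f) / norm f"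
    have r1: "1 < r" unfolding r_def using gt f0 by simp
    obtain n where n: "K < r ^ n" using real_arch_pow[OF r1] by blast
    have "r ^ n \<le> r ^ (2 ^ n)" by (rule power_increasing) (use r1 in \<open>auto simp: less_imp_le\<close>)
    also have "r ^ (2^n) \<le> K" unfolding r_def using bnd[of n] f0 by (simp add: power_divide field_simps)
    finally show False using n by simp
  qed
qed

lemma L_norm:
  assumes x: "0 \<le> x" and c: "corner x e"
  shows "norm (L x e) \<le> norm e"
proof -
  have "(norm (L x e))\<^sup>2 = norm (L x (st e * e))" using cstar[of "L x e"] L_sq_corner[OF x c] by simp
  also have "\<dots> \<le> norm (st e * e)"
    by (rule L_sa_norm[OF x corner_mult[OF corner_st[OF x c] c]]) (simp add: st_mult)
  also have "\<dots> = (norm e)\<^sup>2" by (rule cstar)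
  finally show ?thesis by (rule power2_le_imp_le) simp
qed

end




context l1ctx
begin

lemma pos_one_plus:
  assumes h: "st h = h" and n: "norm h < 1"
  shows "positive_el st (1 + h)"
proof -
  define k where "k = - h"
  have nk: "norm k < 1" using n by (simp add: k_def)
  define s where "s = (\<Sum>n. sqc n *\<^sub>R k^n)"
  have sumn: "summable (\<lambda>n. norm (sqc n *\<^sub>R k^n))" using sqrt_series(1)[OF nk] .
  have sum: "summable (\<lambda>n. sqc n *\<^sub>R k^n)" using summable_norm_cancel[OF sumn] .
  have ss: "s * s = 1 + h" unfolding s_def using sqrt_series(2)[OF nk] by (simp add: k_def)
  have stk: "st k = k" unfolding k_def by (simp add: st_minus h)
  have sts: "st s = s"
  proof -
    have "st s = (\<Sum>n. st (sqc n *\<^sub>R k^n))" unfolding s_def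
      using bounded_linear.suminf[OF bl_st sum] by simp
    also have "\<dots> = s" unfolding s_def by (simp add: st_scaleR st_power stk)
    finally show ?thesis .
  qed
  show ?thesis unfolding positive_el_def using ss sts by metis
qed

lemma L_pos_sa: "0 \<le> x \<Longrightarrow> positive_el st a \<Longrightarrow> st (L x a) = L x a"
  using L_props(4)[of x a] unfolding positive_el_def by (auto simp: st_mult)

lemma L_sa1:
  assumes x: "0 \<le> x" and h: "st h = h" and n: "norm h < 1"
  shows "st (L x h) = L x h"
proof -
  have p1: "st (L x (1 + h)) = L x (1 + h)" by (rule L_pos_sa[OF x pos_one_plus[OF h n]])
  have p2: "st (L x (1 + - h)) = L x (1 + - h)"
    by (rule L_pos_sa[OF x pos_one_plus]) (use h n in \<open>auto simp: st_minus\<close>)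
  have "L x (1 + h) - L x (1 + - h) = L x h + L x h"
    by (simp only: L_add[OF x] L_minus[OF x]) simp
  then have "L x h = (1/2) *\<^sub>R (L x (1 + h) - L x (1 + - h))"
    by (simp add: scaleR_2[symmetric])
  then show ?thesis using p1 p2 by (simp add: st_scaleR st_diff)
qed

lemma L_sa:
  assumes x: "0 \<le> x" and h: "st h = h"
  shows "st (L x h) = L x h"
proof -
  define t where "t = norm h + 1"
  have t0: "t > 0" unfolding t_def by (simp add: add_nonneg_pos)
  have "st (L x ((1/t) *\<^sub>R h)) = L x ((1/t) *\<^sub>R h)"
    by (rule L_sa1[OF x]) (use h t0 in \<open>auto simp: st_scaleR t_def field_simps\<close>)
  then have "(1/t) *\<^sub>R st (L x h) = (1/t) *\<^sub>R L x h" by (simp add: L_scaleR[OF x] st_scaleR)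
  then show ?thesis using t0 by simp
qed

lemma L_st:
  assumes x: "0 \<le> x"
  shows "L x (st e) = st (L x e)"
proof -
  define h1 where "h1 = (1/2) *\<^sub>R (e + st e)"
  define z where "z = (1/2) *\<^sub>R (e - st e)"
  define h2 where "h2 = sc (- \<i>) z"
  have sh1: "st h1 = h1" unfolding h1_def by (simp add: st_scaleR st_add add.commute)
  have stz: "st z = - z" unfolding z_def by (simp add: st_scaleR st_diff algebra_simps)
  have sh2: "st h2 = h2" unfolding h2_def using st_sc[of "- \<i>" z] by (simp add: stz sc_minus sc_neg_i)
  have "(1/2) *\<^sub>R (e + st e) + (1/2) *\<^sub>R (e - st e) = (1/2) *\<^sub>R (e + e)"
    by (simp add: algebra_simps)
  also have "\<dots> = e" by (simp add: scaleR_2[symmetric])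
  finally have e1: "e = h1 + sc \<i> h2" unfolding h2_def sc_i_negi h1_def z_def by simp
  have e2: "st e = h1 + sc (- \<i>) h2"
    using arg_cong[OF e1, of st] by (simp add: st_add st_sc sh1 sh2)
  have "L x (st e) = L x h1 + sc (- \<i>) (L x h2)" by (simp add: e2 L_add[OF x] L_sc[OF x])
  also have "\<dots> = st (L x h1 + sc \<i> (L x h2))"
    by (simp add: st_add st_sc L_sa[OF x sh1] L_sa[OF x sh2])
  also have "L x h1 + sc \<i> (L x h2) = L x e" using e1 by (simp add: L_add[OF x] L_sc[OF x])
  finally show ?thesis .
qed

lemma L_modr:
  assumes x: "0 \<le> x"
  shows "L x (e * \<alpha> x z) = L x e * z"
proof -
  have "L x (e * \<alpha> x z) = st (L x (st (e * \<alpha> x z)))" by (simp add: L_st[OF x])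
  also have "\<dots> = st (L x (\<alpha> x (st z) * st e))" by (simp add: st_mult alpha_st[OF x])
  also have "\<dots> = st (st z * L x (st e))" by (simp add: L_mod[OF x])
  also have "\<dots> = L x e * z" by (simp add: st_mult L_st[OF x])
  finally show ?thesis .
qed

lemma L_zero_id[simp]: "L 0 a = a"
  using L_alpha[of 0 a] by simp

end




context l1ctx
begin

definition inS :: "'g \<Rightarrow> 'a \<Rightarrow> bool" where
  "inS g z \<longleftrightarrow> (0 \<le> g \<longrightarrow> z * \<alpha> g 1 = z) \<and> (g \<le> 0 \<longrightarrow> \<alpha> (- g) 1 * z = z)"

definition pm :: "'g \<Rightarrow> 'g \<Rightarrow> 'a \<Rightarrow> 'a \<Rightarrow> 'a" where
  "pm i j a b = (if 0 \<le> i \<and> 0 \<le> j then a * \<alpha> i b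
     else if 0 < i \<and> j < 0 then (if 0 \<le> i + j then a * \<alpha> (i + j) b else \<alpha> (- (i + j)) a * b)
     else if i < 0 \<and> 0 < j then L (min (- i) j) (a * b)
     else \<alpha> (- j) a * b)"

lemma pmA: "0 \<le> i \<Longrightarrow> 0 \<le> j \<Longrightarrow> pm i j a b = a * \<alpha> i b"
  unfolding pm_def by simp

lemma pmB: "0 \<le> i \<Longrightarrow> j \<le> 0 \<Longrightarrow> 0 \<le> i + j \<Longrightarrow> pm i j a b = a * \<alpha> (i + j) b"
  unfolding pm_def by (cases "j = 0") auto

lemma pmC: "0 \<le> i \<Longrightarrow> j \<le> 0 \<Longrightarrow> i + j \<le> 0 \<Longrightarrow> pm i j a b = \<alpha> (- (i + j)) a * b"
proof -
  assume h: "0 \<le> i" "j \<le> 0" "i + j \<le> 0"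
  show ?thesis
  proof (cases "i = 0")
    case True then show ?thesis using h unfolding pm_def by (cases "j = 0") auto
  next
    case False
    then have "0 < i" using h by simp
    show ?thesis
    proof (cases "i + j = 0")
      case True
      then have "j < 0" using \<open>0 < i\<close> by (metis add_less_same_cancel1 less_le)
      then show ?thesis using True \<open>0 < i\<close> unfolding pm_def by auto
    next
      case False
      have "j < 0" using \<open>0 < i\<close> h by (cases "j = 0") (auto simp: less_le)
      then show ?thesis using False \<open>0 < i\<close> h unfolding pm_def by auto
    qed
  qed
qed

lemma pmD: "i \<le> 0 \<Longrightarrow> j \<le> 0 \<Longrightarrow> pm i j a b = \<alpha> (- j) a * b"
  unfolding pm_def by (cases "i = 0"; cases "j = 0") auto

lemma pmE1: "i \<le> 0 \<Longrightarrow> 0 \<le> j \<Longrightarrow> - i \<le> j \<Longrightarrow> pm i j a b = L (- i) (a * b)"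
  unfolding pm_def by (cases "i = 0"; cases "j = 0") (auto simp: min_def)

lemma pmE2: "i \<le> 0 \<Longrightarrow> 0 \<le> j \<Longrightarrow> j \<le> - i \<Longrightarrow> pm i j a b = L j (a * b)"
  unfolding pm_def by (cases "i = 0"; cases "j = 0") (auto simp: min_def)

lemma RA: "0 \<le> i \<Longrightarrow> 0 \<le> j \<Longrightarrow> pm i j a b = a * \<alpha> i b"
  by (rule pmA)

lemma RB: "0 \<le> i \<Longrightarrow> j = - w \<Longrightarrow> 0 \<le> w \<Longrightarrow> i + j = d \<Longrightarrow> 0 \<le> d \<Longrightarrow> pm i j a b = a * \<alpha> d b"
  using pmB[of i j a b] by simp

lemma RC: "0 \<le> i \<Longrightarrow> j = - w \<Longrightarrow> 0 \<le> w \<Longrightarrow> i + j = - d \<Longrightarrow> 0 \<le> d \<Longrightarrow> pm i j a b = \<alpha> d a * b"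
  using pmC[of i j a b] by simp

lemma RD: "i = - u \<Longrightarrow> 0 \<le> u \<Longrightarrow> j = - w \<Longrightarrow> 0 \<le> w \<Longrightarrow> pm i j a b = \<alpha> w a * b"
  using pmD[of i j a b] by simp

lemma RE1: "i = - u \<Longrightarrow> 0 \<le> u \<Longrightarrow> j = u + t \<Longrightarrow> 0 \<le> t \<Longrightarrow> pm i j a b = L u (a * b)"
  using pmE1[of i j a b] by (simp add: add_nonneg_nonneg)

lemma RE2: assumes "i = - (j + t)" "0 \<le> j" "0 \<le> t" shows "pm i j a b = L j (a * b)"
proof (rule pmE2)
  show "i \<le> 0" using assms(2,3) unfolding assms(1) neg_le_0_iff_le by (rule add_nonneg_nonneg)
  show "j \<le> - i" using assms by simp
qed (use assms in auto)

lemma inS_pos: "0 \<le> g \<Longrightarrow> inS g z \<Longrightarrow> z * \<alpha> g 1 = z"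
  and inS_neg: "g \<le> 0 \<Longrightarrow> inS g z \<Longrightarrow> \<alpha> (- g) 1 * z = z"
  unfolding inS_def by auto

lemma pabs:
  assumes "0 \<le> m" "m \<le> n"
  shows "\<alpha> m 1 * \<alpha> n 1 = \<alpha> n 1" and "\<alpha> n 1 * \<alpha> m 1 = \<alpha> n 1"
proof -
  have e: "\<alpha> n 1 = \<alpha> m (\<alpha> (n - m) 1)" using assms alpha_comp[of m "n - m" 1] by simp
  show "\<alpha> m 1 * \<alpha> n 1 = \<alpha> n 1" unfolding e using alpha_p_left assms by simp
  show "\<alpha> n 1 * \<alpha> m 1 = \<alpha> n 1" unfolding e using alpha_p_right assms by simp
qed

lemma pl: "0 \<le> m \<Longrightarrow> m \<le> n \<Longrightarrow> \<alpha> n 1 * z = z \<Longrightarrow> \<alpha> m 1 * z = z"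
  by (metis pabs(1) mult.assoc)

lemma pr: "0 \<le> m \<Longrightarrow> m \<le> n \<Longrightarrow> z * \<alpha> n 1 = z \<Longrightarrow> z * \<alpha> m 1 = z"
  by (metis pabs(2) mult.assoc)

lemma alpha_p: "0 \<le> m \<Longrightarrow> 0 \<le> t \<Longrightarrow> \<alpha> m (\<alpha> t 1) = \<alpha> (m + t) 1"
  by (rule alpha_comp)

lemma L_modl: "0 \<le> x \<Longrightarrow> z * L x e = L x (\<alpha> x z * e)"
  by (simp add: L_mod)

end




context l1ctx
begin

lemmas nn = add_nonneg_nonneg

lemma as1:
  assumes i: "0 \<le> i" and j: "0 \<le> j" and k: "0 \<le> k"
  shows "pm (i+j) k (pm i j a b) c = pm i (j+k) a (pm j k b c)"
proof -
  have "pm (i+j) k (pm i j a b) c = (a * \<alpha> i b) * \<alpha> (i + j) c"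
    by (simp only: pmA[OF i j] pmA[OF nn[OF i j] k])
  also have "\<dots> = a * \<alpha> i (b * \<alpha> j c)"
    using i j by (simp add: alpha_mult alpha_comp mult.assoc)
  also have "\<dots> = pm i (j+k) a (pm j k b c)"
    by (simp only: pmA[OF i nn[OF j k]] pmA[OF j k])
  finally show ?thesis .
qed

lemma as2ai:
  assumes i: "0 \<le> i" and w: "0 \<le> w" and r: "0 \<le> r" and hj: "j = w + r" and hk: "k = - w"
  shows "pm (i+j) k (pm i j a b) c = pm i (j+k) a (pm j k b c)"
proof -
  have jk: "j + k = r" and ijk: "i + j + k = i + r" by (simp_all add: hj hk algebra_simps)
  have j: "0 \<le> j" using hj w r by simp
  have k: "k \<le> 0" using hk w by simp
  have "pm (i+j) k (pm i j a b) c = (a * \<alpha> i b) * \<alpha> (i + j + k) c"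
    by (simp only: pmA[OF i j] pmB[OF nn[OF i j] k] ijk nn[OF i r])
  also have "\<dots> = a * \<alpha> i (b * \<alpha> r c)"
    using i r by (simp add: ijk alpha_mult alpha_comp mult.assoc)
  also have "\<dots> = pm i (j+k) a (pm j k b c)"
    using pmB[OF j k, of b c] pmA[OF i r] jk r by simp
  finally show ?thesis .
qed

lemma as2aii:
  assumes s: "0 \<le> s" and t: "0 \<le> t" and j: "0 \<le> j" and hi: "i = s + t" and hk: "k = - (j + s)"
  shows "pm (i+j) k (pm i j a b) c = pm i (j+k) a (pm j k b c)"
proof -
  have jk: "j + k = - s" and ijk: "i + j + k = t" by (simp_all add: hi hk algebra_simps)
  have i: "0 \<le> i" using hi s t by simp
  have k: "k \<le> 0" unfolding hk neg_le_0_iff_le using j s by (simp add: nn)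
  have c3: "0 \<le> i + j + k" by (simp only: ijk t)
  have "pm (i+j) k (pm i j a b) c = (a * \<alpha> i b) * \<alpha> t c"
    by (simp only: pmA[OF i j] pmB[OF nn[OF i j] k c3] ijk)
  also have "\<dots> = a * \<alpha> t (\<alpha> s b * c)"
    using s t by (simp add: hi alpha_mult alpha_comp mult.assoc add.commute)
  also have "\<dots> = pm i (j+k) a (pm j k b c)"
  proof -
    have "pm j k b c = \<alpha> s b * c" using pmC[OF j k, of b c] jk s by simp
    moreover have "pm i (- s) a z = a * \<alpha> t z" for z
      by (rule RB[OF i refl s]) (simp_all add: hi t)
    ultimately show ?thesis using jk by simp
  qed
  finally show ?thesis .
qed

lemma as2b:
  assumes i: "0 \<le> i" and j: "0 \<le> j" and s: "0 \<le> s" and hk: "k = - (i + j + s)"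
  shows "pm (i+j) k (pm i j a b) c = pm i (j+k) a (pm j k b c)"
proof -
  have jk: "j + k = - (i + s)" and ijk: "i + j + k = - s" by (simp_all add: hk algebra_simps)
  have k: "k \<le> 0" unfolding hk neg_le_0_iff_le using i j s by (simp add: nn)
  have "pm (i+j) k (pm i j a b) c = \<alpha> s (a * \<alpha> i b) * c"
    using pmA[OF i j, of a b] pmC[OF nn[OF i j] k, of "a * \<alpha> i b" c] ijk s by simp
  also have "\<dots> = \<alpha> s a * (\<alpha> (i + s) b * c)"
    using s i by (simp add: alpha_mult alpha_comp mult.assoc add.commute)
  also have "\<dots> = pm i (j+k) a (pm j k b c)"
  proof -
    have c3: "j + k \<le> 0" unfolding jk neg_le_0_iff_le using i s by (rule nn)
    have "pm j k b c = \<alpha> (i + s) b * c" by (simp only: pmC[OF j k c3] jk minus_minus)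
    moreover have "pm i (- (i + s)) a z = \<alpha> s a * z" for z
      by (rule RC[OF i refl]) (simp_all add: i s nn)
    ultimately show ?thesis using jk by simp
  qed
  finally show ?thesis .
qed

lemma absl: "p * b = b \<Longrightarrow> p * (b * z) = (b * z :: 'a)"
  by (simp add: mult.assoc[symmetric])

lemma absr: "a * p = a \<Longrightarrow> a * (p * z) = (a * z :: 'a)"
  by (simp add: mult.assoc[symmetric])

lemma as3ai:
  assumes v: "0 \<le> v" and t: "0 \<le> t" and r: "0 \<le> r" and hi: "i = v + t" and hj: "j = - v" and hk: "k = v + r"
    and hb: "\<alpha> v 1 * b = b" and hc: "c * \<alpha> (v + r) 1 = c"
  shows "pm (i+j) k (pm i j a b) c = pm i (j+k) a (pm j k b c)"
proof -
  have ij: "i + j = t" and jk: "j + k = r" by (simp_all add: hi hj hk algebra_simps)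
  have i: "0 \<le> i" using hi v t by simp
  have k: "0 \<le> k" using hk v r by simp
  have hc': "c * \<alpha> v 1 = c" by (rule pr[OF v _ hc]) (simp add: r)
  have aL: "\<alpha> v (L v (b * c)) = b * c"
    using L_alpha[OF v, of "b * c"] by (simp add: mult.assoc hc' absl[OF hb])
  have "pm (i+j) k (pm i j a b) c = (a * \<alpha> t b) * \<alpha> t c"
    unfolding ij by (simp only: RB[OF i hj v ij t] RA[OF t k])
  also have "\<dots> = a * \<alpha> t (\<alpha> v (L v (b * c)))" using t by (simp add: aL alpha_mult mult.assoc)
  also have "\<dots> = a * \<alpha> i (L v (b * c))" using alpha_comp[OF t v] by (simp add: hi add.commute)
  also have "\<dots> = pm i (j+k) a (pm j k b c)" unfolding jk by (simp only: RE1[OF hj v hk r] RA[OF i r])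
  finally show ?thesis .
qed

lemma as3aii:
  assumes k: "0 \<le> k" and s: "0 \<le> s" and t: "0 \<le> t" and hi: "i = k + s + t" and hj: "j = - (k + s)"
    and hb: "\<alpha> (k + s) 1 * b = b" and hc: "c * \<alpha> k 1 = c"
  shows "pm (i+j) k (pm i j a b) c = pm i (j+k) a (pm j k b c)"
proof -
  have ij: "i + j = t" and jk: "j + k = - s" and e: "i + - s = k + t" by (simp_all add: hi hj algebra_simps)
  have i: "0 \<le> i" using hi k s t by (simp add: nn)
  have hb': "\<alpha> k 1 * b = b" by (rule pl[OF k _ hb]) (simp add: s)
  have aL: "\<alpha> k (L k (b * c)) = b * c"
    using L_alpha[OF k, of "b * c"] by (simp add: mult.assoc hc absl[OF hb'])
  have "pm (i+j) k (pm i j a b) c = (a * \<alpha> t b) * \<alpha> t c"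
    unfolding ij by (simp only: RB[OF i hj nn[OF k s] ij t] RA[OF t k])
  also have "\<dots> = a * \<alpha> t (\<alpha> k (L k (b * c)))" using t by (simp add: aL alpha_mult mult.assoc)
  also have "\<dots> = a * \<alpha> (k + t) (L k (b * c))" using alpha_comp[OF t k] by (simp add: add.commute)
  also have "\<dots> = pm i (j+k) a (pm j k b c)"
    unfolding jk by (simp only: RE2[OF hj k s] RB[OF i refl s e nn[OF k t]])
  finally show ?thesis .
qed

lemma as3bi:
  assumes i: "0 \<le> i" and n: "0 \<le> n" and r: "0 \<le> r" and hj: "j = - (i + n)" and hk: "k = i + n + r"
    and ha: "a * \<alpha> i 1 = a" and hc: "c * \<alpha> (i + n + r) 1 = c"
  shows "pm (i+j) k (pm i j a b) c = pm i (j+k) a (pm j k b c)"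
proof -
  have ij: "i + j = - n" and jk: "j + k = r" and k2: "k = n + (i + r)" and k3: "k = (i + n) + r"
    by (simp_all add: hj hk algebra_simps)
  have hc': "c * \<alpha> n (\<alpha> i 1) = c"
    using pr[OF nn[OF n i] _ hc] alpha_p[OF n i] r by (simp add: add.commute)
  have Lc: "L n (b * c) * \<alpha> i 1 = L n (b * c)"
    using L_modr[OF n, of "b * c" "\<alpha> i 1"] hc' by (simp add: mult.assoc)
  have "pm (i+j) k (pm i j a b) c = L n (\<alpha> n a * b * c)"
    unfolding ij by (simp only: RC[OF i hj nn[OF i n] ij n] RE1[OF refl n k2 nn[OF i r]])
  also have "\<dots> = a * L n (b * c)" using L_mod[OF n] by (simp add: mult.assoc)
  also have "\<dots> = a * \<alpha> i (L i (L n (b * c)))" using L_alpha[OF i] absr[OF ha] Lc by (simp add: mult.assoc)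
  also have "\<dots> = a * \<alpha> i (L (i + n) (b * c))" using L_comp[OF n i] by (simp add: add.commute)
  also have "\<dots> = pm i (j+k) a (pm j k b c)"
    unfolding jk by (simp only: RE1[OF hj nn[OF i n] k3 r] RA[OF i r])
  finally show ?thesis .
qed

lemma as3biia:
  assumes t: "0 \<le> t" and s: "0 \<le> s" and n: "0 \<le> n" and hi: "i = t + s" and hj: "j = - (t + s + n)" and hk: "k = n + t"
    and ha: "a * \<alpha> (t + s) 1 = a" and hc: "c * \<alpha> (n + t) 1 = c"
  shows "pm (i+j) k (pm i j a b) c = pm i (j+k) a (pm j k b c)"
proof -
  have ij: "i + j = - n" and jk: "j + k = - s" and j2: "j = - (k + s)" and e: "i + - s = t"
    by (simp_all add: hi hj hk algebra_simps)
  have i: "0 \<le> i" using hi t s by (simp add: nn)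
  have k: "0 \<le> k" using hk t n by (simp add: nn)
  have ha': "a * \<alpha> t 1 = a" by (rule pr[OF t _ ha]) (simp add: s)
  have hc': "c * \<alpha> n (\<alpha> t 1) = c" using hc alpha_p[OF n t] by simp
  have Lc: "L n (b * c) * \<alpha> t 1 = L n (b * c)"
    using L_modr[OF n, of "b * c" "\<alpha> t 1"] hc' by (simp add: mult.assoc)
  have "pm (i+j) k (pm i j a b) c = L n (\<alpha> n a * b * c)"
    unfolding ij by (simp only: RC[OF i hj nn[OF nn[OF t s] n] ij n] RE1[OF refl n hk t])
  also have "\<dots> = a * L n (b * c)" using L_mod[OF n] by (simp add: mult.assoc)
  also have "\<dots> = a * \<alpha> t (L t (L n (b * c)))" using L_alpha[OF t] absr[OF ha'] Lc by (simp add: mult.assoc)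
  also have "\<dots> = a * \<alpha> t (L (n + t) (b * c))" using L_comp[OF n t] by simp
  also have "\<dots> = pm i (j+k) a (pm j k b c)"
    unfolding jk hk[symmetric] by (simp only: RE2[OF j2 k s] RB[OF i refl s e t])
  finally show ?thesis .
qed

lemma as3biib:
  assumes i: "0 \<le> i" and k: "0 \<le> k" and s: "0 \<le> s" and hj: "j = - (i + (k + s))"
  shows "pm (i+j) k (pm i j a b) c = pm i (j+k) a (pm j k b c)"
proof -
  have ij: "i + j = - (k + s)" and jk: "j + k = - (i + s)" and j2: "j = - (k + (i + s))"
    and e: "i + - (i + s) = - s"
    by (simp_all add: hj algebra_simps)
  have "pm (i+j) k (pm i j a b) c = L k (\<alpha> (k + s) a * b * c)"
    unfolding ij by (simp only: RC[OF i hj nn[OF i nn[OF k s]] ij nn[OF k s]] RE2[OF refl k s])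
  also have "\<dots> = \<alpha> s a * L k (b * c)"
    using L_mod[OF k, of "\<alpha> s a" "b * c"] alpha_comp[OF k s] by (simp add: mult.assoc)
  also have "\<dots> = pm i (j+k) a (pm j k b c)"
    unfolding jk by (simp only: RE2[OF j2 k nn[OF i s]] RC[OF i refl nn[OF i s] e s])
  finally show ?thesis .
qed

end




context l1ctx
begin

lemma as4ai:
  assumes v: "0 \<le> v" and w: "0 \<le> w" and r: "0 \<le> r" and hi: "i = v + w + r" and hj: "j = - v" and hk: "k = - w"
  shows "pm (i+j) k (pm i j a b) c = pm i (j+k) a (pm j k b c)"
proof -
  have ij: "i + j = w + r" and jk: "j + k = - (v + w)" and e1: "w + r + k = r" and e2: "i + - (v + w) = r"
    by (simp_all add: hi hj hk algebra_simps)
  have i: "0 \<le> i" using hi v w r by (simp add: nn)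
  have "pm (i+j) k (pm i j a b) c = a * \<alpha> (w + r) b * \<alpha> r c"
    unfolding ij by (simp only: RB[OF i hj v ij nn[OF w r]] RB[OF nn[OF w r] hk w e1 r])
  also have "\<dots> = a * \<alpha> r (\<alpha> w b * c)"
    using r w by (simp add: alpha_mult alpha_comp mult.assoc add.commute)
  also have "\<dots> = pm i (j+k) a (pm j k b c)"
    unfolding jk by (simp only: RD[OF hj v hk w] RB[OF i refl nn[OF v w] e2 r])
  finally show ?thesis .
qed

lemma as4aii:
  assumes v: "0 \<le> v" and t: "0 \<le> t" and s: "0 \<le> s" and hi: "i = v + t" and hj: "j = - v" and hk: "k = - (t + s)"
  shows "pm (i+j) k (pm i j a b) c = pm i (j+k) a (pm j k b c)"
proof -
  have ij: "i + j = t" and jk: "j + k = - (v + (t + s))" and e1: "t + k = - s" and e2: "i + - (v + (t + s)) = - s"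
    by (simp_all add: hi hj hk algebra_simps)
  have i: "0 \<le> i" using hi v t by (simp add: nn)
  have "pm (i+j) k (pm i j a b) c = \<alpha> s (a * \<alpha> t b) * c"
    unfolding ij by (simp only: RB[OF i hj v ij t] RC[OF t hk nn[OF t s] e1 s])
  also have "\<dots> = \<alpha> s a * (\<alpha> (t + s) b * c)"
    using s t by (simp add: alpha_mult alpha_comp mult.assoc add.commute)
  also have "\<dots> = pm i (j+k) a (pm j k b c)"
    unfolding jk by (simp only: RD[OF hj v hk nn[OF t s]] RC[OF i refl nn[OF v nn[OF t s]] e2 s])
  finally show ?thesis .
qed

lemma as4b:
  assumes i: "0 \<le> i" and n: "0 \<le> n" and w: "0 \<le> w" and hj: "j = - (i + n)" and hk: "k = - w"
  shows "pm (i+j) k (pm i j a b) c = pm i (j+k) a (pm j k b c)"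
proof -
  have ij: "i + j = - n" and jk: "j + k = - (i + n + w)" and e2: "i + - (i + n + w) = - (n + w)"
    by (simp_all add: hj hk algebra_simps)
  have "pm (i+j) k (pm i j a b) c = \<alpha> w (\<alpha> n a * b) * c"
    unfolding ij by (simp only: RC[OF i hj nn[OF i n] ij n] RD[OF refl n hk w])
  also have "\<dots> = \<alpha> (n + w) a * (\<alpha> w b * c)"
    using n w by (simp add: alpha_mult alpha_comp mult.assoc add.commute)
  also have "\<dots> = pm i (j+k) a (pm j k b c)"
    unfolding jk by (simp only: RD[OF hj nn[OF i n] hk w] RC[OF i refl nn[OF nn[OF i n] w] e2 nn[OF n w]])
  finally show ?thesis .
qed

lemma as5a:
  assumes u: "0 \<le> u" and t: "0 \<le> t" and k: "0 \<le> k" and hi: "i = - u" and hj: "j = u + t"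
  shows "pm (i+j) k (pm i j a b) c = pm i (j+k) a (pm j k b c)"
proof -
  have ij: "i + j = t" and jk: "j + k = u + (t + k)" by (simp_all add: hi hj algebra_simps)
  have j: "0 \<le> j" using hj u t by (simp add: nn)
  have "pm (i+j) k (pm i j a b) c = L u (a * b) * \<alpha> t c"
    unfolding ij by (simp only: RE1[OF hi u hj t] RA[OF t k])
  also have "\<dots> = L u (a * (b * \<alpha> j c))"
    using L_modr[OF u, of "a * b" "\<alpha> t c"] alpha_comp[OF u t] by (simp add: mult.assoc hj)
  also have "\<dots> = pm i (j+k) a (pm j k b c)"
    unfolding jk by (simp only: RA[OF j k] RE1[OF hi u refl nn[OF t k]])
  finally show ?thesis .
qed

lemma as5bi:
  assumes j: "0 \<le> j" and n: "0 \<le> n" and r: "0 \<le> r" and hi: "i = - (j + n)" and hk: "k = n + r"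
  shows "pm (i+j) k (pm i j a b) c = pm i (j+k) a (pm j k b c)"
proof -
  have ij: "i + j = - n" and jk: "j + k = (j + n) + r" by (simp_all add: hi hk algebra_simps)
  have k: "0 \<le> k" using hk n r by (simp add: nn)
  have "pm (i+j) k (pm i j a b) c = L n (L j (a * b) * c)"
    unfolding ij by (simp only: RE2[OF hi j n] RE1[OF refl n hk r])
  also have "\<dots> = L (j + n) (a * (b * \<alpha> j c))"
    using L_modr[OF j, of "a * b" c] L_comp[OF j n] by (simp add: mult.assoc)
  also have "\<dots> = pm i (j+k) a (pm j k b c)"
    by (simp only: RA[OF j k] RE1[OF hi nn[OF j n] jk r])
  finally show ?thesis .
qed

lemma as5bii:
  assumes j: "0 \<le> j" and k: "0 \<le> k" and s: "0 \<le> s" and hi: "i = - (j + (k + s))"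
  shows "pm (i+j) k (pm i j a b) c = pm i (j+k) a (pm j k b c)"
proof -
  have ij: "i + j = - (k + s)" and i2: "i = - ((j + k) + s)" by (simp_all add: hi algebra_simps)
  have "pm (i+j) k (pm i j a b) c = L k (L j (a * b) * c)"
    unfolding ij by (simp only: RE2[OF hi j nn[OF k s]] RE2[OF refl k s])
  also have "\<dots> = L (j + k) (a * (b * \<alpha> j c))"
    using L_modr[OF j, of "a * b" c] L_comp[OF j k] by (simp add: mult.assoc)
  also have "\<dots> = pm i (j+k) a (pm j k b c)"
    by (simp only: RA[OF j k] RE2[OF i2 nn[OF j k] s])
  finally show ?thesis .
qed

lemma as6a1a:
  assumes u: "0 \<le> u" and w: "0 \<le> w" and r: "0 \<le> r" and hi: "i = - u" and hj: "j = u + w + r" and hk: "k = - w"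
  shows "pm (i+j) k (pm i j a b) c = pm i (j+k) a (pm j k b c)"
proof -
  have ij: "i + j = w + r" and jk: "j + k = u + r" and j2: "j = u + (w + r)" and e1: "w + r + k = r"
    by (simp_all add: hi hj hk algebra_simps)
  have j: "0 \<le> j" using hj u w r by (simp add: nn)
  have "pm (i+j) k (pm i j a b) c = L u (a * b) * \<alpha> r c"
    unfolding ij by (simp only: RE1[OF hi u j2 nn[OF w r]] RB[OF nn[OF w r] hk w e1 r])
  also have "\<dots> = L u (a * (b * \<alpha> (u + r) c))"
    using L_modr[OF u, of "a * b" "\<alpha> r c"] alpha_comp[OF u r] by (simp add: mult.assoc)
  also have "\<dots> = pm i (j+k) a (pm j k b c)"
    unfolding jk by (simp only: RB[OF j hk w jk nn[OF u r]] RE1[OF hi u refl r])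
  finally show ?thesis .
qed

lemma as6a1b:
  assumes s: "0 \<le> s" and m: "0 \<le> m" and t: "0 \<le> t" and hi: "i = - (s + m)" and hj: "j = s + m + t"
    and hk: "k = - (t + s)" and ha: "\<alpha> (s + m) 1 * a = a" and hc: "\<alpha> (t + s) 1 * c = c"
  shows "pm (i+j) k (pm i j a b) c = pm i (j+k) a (pm j k b c)"
proof -
  have ij: "i + j = t" and jk: "j + k = m" and e1: "t + k = - s" and i2: "i = - (m + s)"
    by (simp_all add: hi hj hk algebra_simps)
  have j: "0 \<le> j" using hj s m t by (simp add: nn)
  have hc': "\<alpha> s 1 * c = c" by (rule pl[OF s _ hc]) (simp add: t)
  have ha': "\<alpha> (m + s) 1 * a = a" using ha by (simp add: add.commute)
  have Y: "\<alpha> s 1 * L m (a * b) = L m (a * b)"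
    using L_modl[OF m, of "\<alpha> s 1" "a * b"] alpha_p[OF m s] absl[OF ha'] by simp
  have "pm (i+j) k (pm i j a b) c = \<alpha> s (L (s + m) (a * b)) * c"
    unfolding ij by (simp only: RE1[OF hi nn[OF s m] hj t] RC[OF t hk nn[OF t s] e1 s])
  also have "\<dots> = \<alpha> s (L s (L m (a * b))) * c" using L_comp[OF m s] by (simp add: add.commute)
  also have "\<dots> = L m (a * b) * c" using L_alpha[OF s] absl[OF Y] hc' by (simp add: mult.assoc)
  also have "\<dots> = L m (a * (b * \<alpha> m c))" using L_modr[OF m, of "a * b" c] by (simp add: mult.assoc)
  also have "\<dots> = pm i (j+k) a (pm j k b c)"
    unfolding jk by (simp only: RB[OF j hk nn[OF t s] jk m] RE2[OF i2 m s])
  finally show ?thesis .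
qed

lemma as6a2:
  assumes u: "0 \<le> u" and t: "0 \<le> t" and s: "0 \<le> s" and hi: "i = - u" and hj: "j = u + t"
    and hk: "k = - (u + t + s)" and ha: "\<alpha> u 1 * a = a" and hc: "\<alpha> (u + t + s) 1 * c = c"
  shows "pm (i+j) k (pm i j a b) c = pm i (j+k) a (pm j k b c)"
proof -
  have ij: "i + j = t" and jk: "j + k = - s" and e1: "t + k = - (u + s)"
    by (simp_all add: hi hj hk algebra_simps)
  have j: "0 \<le> j" using hj u t by (simp add: nn)
  have hc': "\<alpha> (s + u) 1 * c = c" by (rule pl[OF nn[OF s u] _ hc]) (simp add: t algebra_simps)
  have "pm (i+j) k (pm i j a b) c = \<alpha> (u + s) (L u (a * b)) * c"
    unfolding ij by (simp only: RE1[OF hi u hj t] RC[OF t hk nn[OF nn[OF u t] s] e1 nn[OF u s]])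
  also have "\<dots> = \<alpha> s (\<alpha> u (L u (a * b))) * c" using alpha_comp[OF s u] by (simp add: add.commute)
  also have "\<dots> = \<alpha> s (a * b * \<alpha> u 1) * c" using L_alpha[OF u] absl[OF ha] by (simp add: mult.assoc)
  also have "\<dots> = \<alpha> s a * (\<alpha> s b * c)"
    using alpha_mult[OF s] alpha_p[OF s u] hc' by (simp add: mult.assoc)
  also have "\<dots> = pm i (j+k) a (pm j k b c)"
    unfolding jk by (simp only: RC[OF j hk nn[OF nn[OF u t] s] jk s] RD[OF hi u refl s])
  finally show ?thesis .
qed

lemma as6b1:
  assumes w: "0 \<le> w" and r: "0 \<le> r" and n: "0 \<le> n" and hj: "j = w + r" and hi: "i = - (w + r + n)"
    and hk: "k = - w" and ha: "\<alpha> (w + r + n) 1 * a = a" and hc: "\<alpha> w 1 * c = c"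
  shows "pm (i+j) k (pm i j a b) c = pm i (j+k) a (pm j k b c)"
proof -
  have ij: "i + j = - n" and jk: "j + k = r" and i1: "i = - (j + n)" and i2: "i = - (r + (w + n))"
    by (simp_all add: hi hj hk algebra_simps)
  have j: "0 \<le> j" using hj w r by (simp add: nn)
  have ha': "\<alpha> (r + w) 1 * a = a" by (rule pl[OF nn[OF r w] _ ha]) (simp add: n algebra_simps)
  have Y: "\<alpha> w 1 * L r (a * b) = L r (a * b)"
    using L_modl[OF r, of "\<alpha> w 1" "a * b"] alpha_p[OF r w] absl[OF ha'] by simp
  have "pm (i+j) k (pm i j a b) c = \<alpha> w (L j (a * b)) * c"
    unfolding ij by (simp only: RE2[OF i1 j n] RD[OF refl n hk w])
  also have "\<dots> = \<alpha> w (L (w + r) (a * b)) * c" by (simp add: hj)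
  also have "\<dots> = \<alpha> w (L w (L r (a * b))) * c" using L_comp[OF r w] by (simp add: add.commute)
  also have "\<dots> = L r (a * b) * c" using L_alpha[OF w] absl[OF Y] hc by (simp add: mult.assoc)
  also have "\<dots> = L r (a * (b * \<alpha> r c))" using L_modr[OF r, of "a * b" c] by (simp add: mult.assoc)
  also have "\<dots> = pm i (j+k) a (pm j k b c)"
    unfolding jk by (simp only: RB[OF j hk w jk r] RE2[OF i2 r nn[OF w n]])
  finally show ?thesis .
qed

lemma as6b2:
  assumes j: "0 \<le> j" and s: "0 \<le> s" and n: "0 \<le> n" and hi: "i = - (j + n)" and hk: "k = - (j + s)"
    and ha: "\<alpha> (j + n) 1 * a = a" and hc: "\<alpha> (j + s) 1 * c = c"
  shows "pm (i+j) k (pm i j a b) c = pm i (j+k) a (pm j k b c)"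
proof -
  have ij: "i + j = - n" and jk: "j + k = - s" by (simp_all add: hi hk algebra_simps)
  have ha': "\<alpha> j 1 * a = a" by (rule pl[OF j _ ha]) (simp add: n)
  have hc': "\<alpha> (s + j) 1 * c = c" using hc by (simp add: add.commute)
  have "pm (i+j) k (pm i j a b) c = \<alpha> (j + s) (L j (a * b)) * c"
    unfolding ij by (simp only: RE2[OF hi j n] RD[OF refl n hk nn[OF j s]])
  also have "\<dots> = \<alpha> s (\<alpha> j (L j (a * b))) * c" using alpha_comp[OF s j] by (simp add: add.commute)
  also have "\<dots> = \<alpha> s (a * b * \<alpha> j 1) * c" using L_alpha[OF j] absl[OF ha'] by (simp add: mult.assoc)
  also have "\<dots> = \<alpha> s a * (\<alpha> s b * c)"
    using alpha_mult[OF s] alpha_p[OF s j] hc' by (simp add: mult.assoc)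
  also have "\<dots> = pm i (j+k) a (pm j k b c)"
    unfolding jk by (simp only: RC[OF j hk nn[OF j s] jk s] RD[OF hi nn[OF j n] refl s])
  finally show ?thesis .
qed

lemma as7ai:
  assumes u: "0 \<le> u" and v: "0 \<le> v" and m: "0 \<le> m" and hi: "i = - u" and hj: "j = - v" and hk: "k = v + u + m"
  shows "pm (i+j) k (pm i j a b) c = pm i (j+k) a (pm j k b c)"
proof -
  have ij: "i + j = - (v + u)" and jk: "j + k = u + m" and k1: "k = v + (u + m)" by (simp_all add: hi hj hk algebra_simps)
  have "pm (i+j) k (pm i j a b) c = L (v + u) (\<alpha> v a * b * c)"
    unfolding ij by (simp only: RD[OF hi u hj v] RE1[OF refl nn[OF v u] hk m])
  also have "\<dots> = L u (a * L v (b * c))" using L_comp[OF v u] L_mod[OF v] by (simp add: mult.assoc)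
  also have "\<dots> = pm i (j+k) a (pm j k b c)"
    unfolding jk by (simp only: RE1[OF hj v k1 nn[OF u m]] RE1[OF hi u refl m])
  finally show ?thesis .
qed

lemma as7aii:
  assumes r: "0 \<le> r" and s: "0 \<le> s" and v: "0 \<le> v" and hi: "i = - (r + s)" and hj: "j = - v" and hk: "k = v + r"
  shows "pm (i+j) k (pm i j a b) c = pm i (j+k) a (pm j k b c)"
proof -
  have ij: "i + j = - (k + s)" and jk: "j + k = r" by (simp_all add: hi hj hk algebra_simps)
  have k: "0 \<le> k" using hk v r by (simp add: nn)
  have "pm (i+j) k (pm i j a b) c = L k (\<alpha> v a * b * c)"
    unfolding ij by (simp only: RD[OF hi nn[OF r s] hj v] RE2[OF refl k s])
  also have "\<dots> = L (v + r) (\<alpha> v a * b * c)" by (simp add: hk)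
  also have "\<dots> = L r (a * L v (b * c))" using L_comp[OF v r] L_mod[OF v] by (simp add: mult.assoc)
  also have "\<dots> = pm i (j+k) a (pm j k b c)"
    unfolding jk by (simp only: RE1[OF hj v hk r] RE2[OF hi r s])
  finally show ?thesis .
qed

lemma as7b:
  assumes u: "0 \<le> u" and k: "0 \<le> k" and s: "0 \<le> s" and hi: "i = - u" and hj: "j = - (k + s)"
  shows "pm (i+j) k (pm i j a b) c = pm i (j+k) a (pm j k b c)"
proof -
  have ij: "i + j = - (k + (u + s))" and jk: "j + k = - s" by (simp_all add: hi hj algebra_simps)
  have "pm (i+j) k (pm i j a b) c = L k (\<alpha> (k + s) a * b * c)"
    unfolding ij by (simp only: RD[OF hi u hj nn[OF k s]] RE2[OF refl k nn[OF u s]])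
  also have "\<dots> = \<alpha> s a * L k (b * c)"
    using L_mod[OF k, of "\<alpha> s a" "b * c"] alpha_comp[OF k s] by (simp add: mult.assoc)
  also have "\<dots> = pm i (j+k) a (pm j k b c)"
    unfolding jk by (simp only: RE2[OF hj k s] RD[OF hi u refl s])
  finally show ?thesis .
qed

lemma as8:
  assumes u: "0 \<le> u" and v: "0 \<le> v" and w: "0 \<le> w" and hi: "i = - u" and hj: "j = - v" and hk: "k = - w"
  shows "pm (i+j) k (pm i j a b) c = pm i (j+k) a (pm j k b c)"
proof -
  have ij: "i + j = - (u + v)" and jk: "j + k = - (v + w)" by (simp_all add: hi hj hk algebra_simps)
  have "pm (i+j) k (pm i j a b) c = \<alpha> w (\<alpha> v a * b) * c"
    unfolding ij by (simp only: RD[OF hi u hj v] RD[OF refl nn[OF u v] hk w])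
  also have "\<dots> = \<alpha> (v + w) a * (\<alpha> w b * c)"
    using v w by (simp add: alpha_mult alpha_comp mult.assoc add.commute)
  also have "\<dots> = pm i (j+k) a (pm j k b c)"
    unfolding jk by (simp only: RD[OF hj v hk w] RD[OF hi u refl nn[OF v w]])
  finally show ?thesis .
qed

end




context l1ctx
begin

lemma ngt: "\<not> 0 \<le> x \<Longrightarrow> 0 \<le> - (x::'g)"
  by (metis neg_0_le_iff_le not_le less_imp_le)

lemma nle: "x \<le> 0 \<Longrightarrow> 0 \<le> - (x::'g)"
  by simp

lemma pm_assoc:
  assumes A: "inS i a" and B: "inS j b" and C: "inS k c"
  shows "pm (i+j) k (pm i j a b) c = pm i (j+k) a (pm j k b c)"
proof -
  have ap: "0 \<le> i \<Longrightarrow> a * \<alpha> i 1 = a" and an: "i \<le> 0 \<Longrightarrow> \<alpha> (- i) 1 * a = a"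
    and bp: "0 \<le> j \<Longrightarrow> b * \<alpha> j 1 = b" and bn: "j \<le> 0 \<Longrightarrow> \<alpha> (- j) 1 * b = b"
    and cp: "0 \<le> k \<Longrightarrow> c * \<alpha> k 1 = c" and cn: "k \<le> 0 \<Longrightarrow> \<alpha> (- k) 1 * c = c"
    using A B C unfolding inS_def by auto
  show ?thesis
  proof (cases "0 \<le> i")
    case i: True
    show ?thesis
    proof (cases "0 \<le> j")
      case j: True
      show ?thesis
      proof (cases "0 \<le> k")
        case True then show ?thesis by (rule as1[OF i j])
      next
        case False then have k: "k \<le> 0" by simp
        show ?thesis
        proof (cases "0 \<le> j + k")
          case True then show ?thesis
            by (intro as2ai[OF i nle[OF k] True]) (simp_all add: algebra_simps)
        next
          case jk: False
          show ?thesis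
          proof (cases "0 \<le> i + j + k")
            case True then show ?thesis
              by (intro as2aii[OF ngt[OF jk] True j]) (simp_all add: algebra_simps)
          next
            case False then show ?thesis
              by (intro as2b[OF i j ngt[OF False]]) (simp_all add: algebra_simps)
          qed
        qed
      qed
    next
      case False then have j: "j \<le> 0" by simp
      show ?thesis
      proof (cases "0 \<le> k")
        case k: True
        show ?thesis
        proof (cases "0 \<le> i + j")
          case ij: True
          show ?thesis
          proof (cases "0 \<le> j + k")
            case True then show ?thesis
              by (intro as3ai[OF nle[OF j] ij True]) (use bn[OF j] cp[OF k] in \<open>simp_all add: algebra_simps\<close>)
          next
            case False then show ?thesis
              by (intro as3aii[OF k ngt[OF False] ij]) (use bn[OF j] cp[OF k] in \<open>simp_all add: algebra_simps\<close>)
          qed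
        next
          case ij: False
          show ?thesis
          proof (cases "0 \<le> j + k")
            case True then show ?thesis
              by (intro as3bi[OF i ngt[OF ij] True]) (use ap[OF i] cp[OF k] in \<open>simp_all add: algebra_simps\<close>)
          next
            case jk: False
            show ?thesis
            proof (cases "0 \<le> i + j + k")
              case True then show ?thesis
                by (intro as3biia[OF True ngt[OF jk] ngt[OF ij]])
                   (use ap[OF i] cp[OF k] in \<open>simp_all add: algebra_simps\<close>)
            next
              case False then show ?thesis
                by (intro as3biib[OF i k ngt[OF False]]) (simp_all add: algebra_simps)
            qed
          qed
        qed
      next
        case False then have k: "k \<le> 0" by simp
        show ?thesis
        proof (cases "0 \<le> i + j")
          case ij: True
          show ?thesis
          proof (cases "0 \<le> i + j + k")
            case True then show ?thesis
              by (intro as4ai[OF nle[OF j] nle[OF k] True]) (simp_all add: algebra_simps)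
          next
            case False then show ?thesis
              by (intro as4aii[OF nle[OF j] ij ngt[OF False]]) (simp_all add: algebra_simps)
          qed
        next
          case False then show ?thesis
            by (intro as4b[OF i ngt[OF False] nle[OF k]]) (simp_all add: algebra_simps)
        qed
      qed
    qed
  next
    case False then have i: "i \<le> 0" by simp
    show ?thesis
    proof (cases "0 \<le> j")
      case j: True
      show ?thesis
      proof (cases "0 \<le> k")
        case k: True
        show ?thesis
        proof (cases "0 \<le> i + j")
          case True then show ?thesis
            by (intro as5a[OF nle[OF i] True k]) (simp_all add: algebra_simps)
        next
          case ij: False
          show ?thesis
          proof (cases "0 \<le> i + j + k")
            case True then show ?thesis
              by (intro as5bi[OF j ngt[OF ij] True]) (simp_all add: algebra_simps)
          next
            case False then show ?thesis
              by (intro as5bii[OF j k ngt[OF False]]) (simp_all add: algebra_simps)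
          qed
        qed
      next
        case False then have k: "k \<le> 0" by simp
        show ?thesis
        proof (cases "0 \<le> i + j")
          case ij: True
          show ?thesis
          proof (cases "0 \<le> j + k")
            case jk: True
            show ?thesis
            proof (cases "0 \<le> i + j + k")
              case True then show ?thesis
                by (intro as6a1a[OF nle[OF i] nle[OF k] True]) (simp_all add: algebra_simps)
            next
              case False then show ?thesis
                by (intro as6a1b[OF ngt[OF False] jk ij])
                   (use an[OF i] cn[OF k] in \<open>simp_all add: algebra_simps\<close>)
            qed
          next
            case False then show ?thesis
              by (intro as6a2[OF nle[OF i] ij ngt[OF False]])
                 (use an[OF i] cn[OF k] in \<open>simp_all add: algebra_simps\<close>)
          qed
        next
          case ij: False
          show ?thesis
          proof (cases "0 \<le> j + k")
            case True then show ?thesis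
              by (intro as6b1[OF nle[OF k] True ngt[OF ij]])
                 (use an[OF i] cn[OF k] in \<open>simp_all add: algebra_simps\<close>)
          next
            case False then show ?thesis
              by (intro as6b2[OF j ngt[OF False] ngt[OF ij]])
                 (use an[OF i] cn[OF k] in \<open>simp_all add: algebra_simps\<close>)
          qed
        qed
      qed
    next
      case False then have j: "j \<le> 0" by simp
      show ?thesis
      proof (cases "0 \<le> k")
        case k: True
        show ?thesis
        proof (cases "0 \<le> j + k")
          case jk: True
          show ?thesis
          proof (cases "0 \<le> i + j + k")
            case True then show ?thesis
              by (intro as7ai[OF nle[OF i] nle[OF j] True]) (simp_all add: algebra_simps)
          next
            case False then show ?thesis
              by (intro as7aii[OF jk ngt[OF False] nle[OF j]]) (simp_all add: algebra_simps)
          qed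
        next
          case False then show ?thesis
            by (intro as7b[OF nle[OF i] k ngt[OF False]]) (simp_all add: algebra_simps)
        qed
      next
        case False then have k: "k \<le> 0" by simp
        show ?thesis
          by (intro as8[OF nle[OF i] nle[OF j] nle[OF k]]) simp_all
      qed
    qed
  qed
qed

end




context l1ctx
begin

lemma pm_regions:
  obtains (A) "0 \<le> i" "0 \<le> j" "\<And>a b. pm i j a b = a * \<alpha> i b"
   | (B) "0 \<le> i" "0 \<le> - j" "0 \<le> i + j" "\<And>a b. pm i j a b = a * \<alpha> (i + j) b"
   | (C) "0 \<le> i" "0 \<le> - j" "0 \<le> - (i + j)" "\<And>a b. pm i j a b = \<alpha> (- (i + j)) a * b"
   | (D) "0 \<le> - i" "0 \<le> - j" "\<And>a b. pm i j a b = \<alpha> (- j) a * b"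
   | (E1) "0 \<le> - i" "0 \<le> j" "0 \<le> i + j" "\<And>a b. pm i j a b = L (- i) (a * b)"
   | (E2) "0 \<le> - i" "0 \<le> j" "0 \<le> - (i + j)" "\<And>a b. pm i j a b = L j (a * b)"
proof (cases "0 \<le> i")
  case i: True
  show ?thesis
  proof (cases "0 \<le> j")
    case True then show ?thesis using A i pmA by blast
  next
    case j: False
    show ?thesis
    proof (cases "0 \<le> i + j")
      case True then show ?thesis using B i ngt[OF j] pmB[OF i] j by simp
    next
      case False then show ?thesis using C i ngt[OF j] ngt[OF False] pmC[OF i] j by simp
    qed
  qed
next
  case i: False
  show ?thesis
  proof (cases "0 \<le> j")
    case j: True
    show ?thesis
    proof (cases "0 \<le> i + j")
      case True
      have "pm i j a b = L (- i) (a * b)" for a b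
        by (rule RE1[of i "- i" j "i + j"]) (use True ngt[OF i] in \<open>simp_all add: algebra_simps\<close>)
      then show ?thesis using E1 j ngt[OF i] True by blast
    next
      case False
      have "pm i j a b = L j (a * b)" for a b
        by (rule RE2[of i j "- (i + j)"]) (use j ngt[OF False] in \<open>simp_all add: algebra_simps\<close>)
      then show ?thesis using E2 j ngt[OF i] ngt[OF False] by blast
    qed
  next
    case j: False
    have "pm i j a b = \<alpha> (- j) a * b" for a b
      by (rule RD[of i "- i" j "- j"]) (use ngt[OF i] ngt[OF j] in simp_all)
    then show ?thesis using D ngt[OF i] ngt[OF j] by blast
  qed
qed

lemma gsum1: "0 \<le> i + j \<Longrightarrow> - i \<le> (j::'g)"
  using add_left_mono[of 0 "i + j" "- i"] by (simp add: add.assoc[symmetric])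

lemma gsum2: "0 \<le> - (i + j) \<Longrightarrow> j \<le> - (i::'g)"
  using add_left_mono[of 0 "- (i + j)" j] by (simp add: algebra_simps)

lemma inS_intro:
  assumes "0 < g \<Longrightarrow> z * \<alpha> g 1 = z" and "g < 0 \<Longrightarrow> \<alpha> (- g) 1 * z = z"
  shows "inS g z"
  unfolding inS_def using assms by (cases "g = 0") (auto simp: less_le)

lemma pm_norm:
  assumes A: "inS i a" and B: "inS j b"
  shows "norm (pm i j a b) \<le> norm a * norm b"
proof -
  have m1: "norm (x * \<alpha> t y) \<le> norm x * norm y" if "0 \<le> t" for x y t
    by (rule order_trans[OF norm_mult_ineq]) (intro mult_left_mono alpha_norm that; simp)
  have m2: "norm (\<alpha> t x * y) \<le> norm x * norm y" if "0 \<le> t" for x y t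
    by (rule order_trans[OF norm_mult_ineq]) (intro mult_right_mono alpha_norm that; simp)
  show ?thesis
  proof (cases rule: pm_regions[of i j])
    case A then show ?thesis using m1 by simp
  next
    case B then show ?thesis using m1 by simp
  next
    case C then show ?thesis using m2 by simp
  next
    case D then show ?thesis using m2 by simp
  next
    case E1
    have an: "\<alpha> (- i) 1 * a = a" using A E1 unfolding inS_def by simp
    have bp: "b * \<alpha> j 1 = b" using B E1 unfolding inS_def by simp
    have bp': "b * \<alpha> (- i) 1 = b" by (rule pr[OF E1(1) gsum1[OF E1(3)] bp])
    have "corner (- i) (a * b)" unfolding corner_def using an bp' by (simp add: mult.assoc absl[OF an])
    then have "norm (L (- i) (a * b)) \<le> norm (a * b)" using L_norm[OF E1(1)] by blast
    then show ?thesis using E1(4) norm_mult_ineq[of a b] by simp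
  next
    case E2
    have an: "\<alpha> (- i) 1 * a = a" using A E2 unfolding inS_def by simp
    have an': "\<alpha> j 1 * a = a" by (rule pl[OF E2(2) gsum2[OF E2(3)] an])
    have bp: "b * \<alpha> j 1 = b" using B E2 unfolding inS_def by simp
    have "corner j (a * b)" unfolding corner_def using an' bp by (simp add: mult.assoc absl[OF an'])
    then have "norm (L j (a * b)) \<le> norm (a * b)" using L_norm[OF E2(2)] by blast
    then show ?thesis using E2(4) norm_mult_ineq[of a b] by simp
  qed
qed

end




context l1ctx
begin

lemma pos_neg_False: "0 < (x::'g) \<Longrightarrow> 0 \<le> - x \<Longrightarrow> False"
  by simp

lemma pm_inS:
  assumes A: "inS i a" and B: "inS j b"
  shows "inS (i + j) (pm i j a b)"
proof -
  have ap: "0 \<le> i \<Longrightarrow> a * \<alpha> i 1 = a" and an: "0 \<le> - i \<Longrightarrow> \<alpha> (- i) 1 * a = a"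
    and bp: "0 \<le> j \<Longrightarrow> b * \<alpha> j 1 = b" and bn: "0 \<le> - j \<Longrightarrow> \<alpha> (- j) 1 * b = b"
    using A B unfolding inS_def by auto
  show ?thesis
  proof (cases rule: pm_regions[of i j])
    case A
    show ?thesis
    proof (rule inS_intro)
      show "pm i j a b * \<alpha> (i + j) 1 = pm i j a b"
        using A(3) alpha_p[OF A(1,2)] alpha_mult[OF A(1), of b "\<alpha> j 1"] bp[OF A(2)]
        by (simp add: mult.assoc)
      assume "i + j < 0" then show "\<alpha> (- (i + j)) 1 * pm i j a b = pm i j a b"
        using nn[OF A(1,2)] by simp
    qed
  next
    case B
    show ?thesis
    proof (rule inS_intro)
      show "pm i j a b * \<alpha> (i + j) 1 = pm i j a b"
        using B(4) alpha_p_right[OF B(3)] by (simp add: mult.assoc)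
      assume "i + j < 0" then show "\<alpha> (- (i + j)) 1 * pm i j a b = pm i j a b"
        using B(3) by simp
    qed
  next
    case C
    show ?thesis
    proof (rule inS_intro)
      assume "0 < i + j" then show "pm i j a b * \<alpha> (i + j) 1 = pm i j a b"
        using pos_neg_False C(3) by blast
    next
      show "\<alpha> (- (i + j)) 1 * pm i j a b = pm i j a b"
        using C(4) alpha_p_left[OF C(3)] by (simp add: mult.assoc[symmetric])
    qed
  next
    case D
    have e: "- (i + j) = - j + - i" by (simp add: algebra_simps)
    show ?thesis
    proof (rule inS_intro)
      assume "0 < i + j" then show "pm i j a b * \<alpha> (i + j) 1 = pm i j a b"
      proof -
        have "0 \<le> - (i + j)" unfolding e using nn[OF D(2,1)] .
        then show ?thesis using pos_neg_False \<open>0 < i + j\<close> by blast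
      qed
    next
      have "\<alpha> (- j + - i) 1 * \<alpha> (- j) a = \<alpha> (- j) a"
        using alpha_p[OF D(2,1)] alpha_mult[OF D(2), of "\<alpha> (- i) 1" a] an[OF D(1)] by simp
      then show "\<alpha> (- (i + j)) 1 * pm i j a b = pm i j a b"
        unfolding D(3) e by (simp add: mult.assoc[symmetric])
    qed
  next
    case E1
    show ?thesis
    proof (rule inS_intro)
      have e: "j = - i + (i + j)" by (simp add: algebra_simps)
      have "b * \<alpha> (- i) (\<alpha> (i + j) 1) = b"
        using bp[OF E1(2)] alpha_p[OF E1(1,3)] e by simp
      then show "pm i j a b * \<alpha> (i + j) 1 = pm i j a b"
        using E1(4) L_modr[OF E1(1), of "a * b" "\<alpha> (i + j) 1"] by (simp add: mult.assoc)
      assume "i + j < 0" then show "\<alpha> (- (i + j)) 1 * pm i j a b = pm i j a b"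
        using E1(3) by simp
    qed
  next
    case E2
    show ?thesis
    proof (rule inS_intro)
      assume "0 < i + j" then show "pm i j a b * \<alpha> (i + j) 1 = pm i j a b"
        using pos_neg_False E2(3) by blast
    next
      have e: "j + - (i + j) = - i" by (simp add: algebra_simps)
      have "\<alpha> j (\<alpha> (- (i + j)) 1) * (a * b) = a * b"
        using alpha_p[OF E2(2,3)] e an[OF E2(1)] by (simp add: mult.assoc[symmetric])
      then show "\<alpha> (- (i + j)) 1 * pm i j a b = pm i j a b"
        using E2(4) L_modl[OF E2(2)] by simp
    qed
  qed
qed

lemma pm_st: "st (pm i j a b) = pm (- j) (- i) (st b) (st a)"
proof (cases rule: pm_regions[of i j])
  case A
  have "pm (- j) (- i) (st b) (st a) = \<alpha> i (st b) * st a"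
    by (rule RD[of _ j _ i]) (use A in simp_all)
  then show ?thesis using A by (simp add: st_mult alpha_st)
next
  case B
  have "pm (- j) (- i) (st b) (st a) = \<alpha> (i + j) (st b) * st a"
    by (rule RC[of _ _ i]) (use B in \<open>simp_all add: algebra_simps\<close>)
  then show ?thesis using B by (simp add: st_mult alpha_st)
next
  case C
  have "pm (- j) (- i) (st b) (st a) = st b * \<alpha> (- (i + j)) (st a)"
    by (rule RB[of _ _ i]) (use C in \<open>simp_all add: algebra_simps\<close>)
  then show ?thesis using C by (simp add: st_mult alpha_st)
next
  case D
  have "pm (- j) (- i) (st b) (st a) = st b * \<alpha> (- j) (st a)"
    by (rule RA) (use D in simp_all)
  then show ?thesis using D by (simp add: st_mult alpha_st)
next
  case E1
  have "pm (- j) (- i) (st b) (st a) = L (- i) (st b * st a)"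
    by (rule RE2[of _ _ "i + j"]) (use E1 in \<open>simp_all add: algebra_simps\<close>)
  then show ?thesis using E1 by (simp add: st_mult L_st[OF E1(1), symmetric])
next
  case E2
  have "pm (- j) (- i) (st b) (st a) = L j (st b * st a)"
    by (rule RE1[of _ j _ "- (i + j)"]) (use E2 in \<open>simp_all add: algebra_simps\<close>)
  then show ?thesis using E2 by (simp add: st_mult L_st[OF E2(2), symmetric])
qed

lemma pm_unit_l: "inS j b \<Longrightarrow> pm 0 j 1 b = b"
proof (cases "0 \<le> j")
  case True then show ?thesis using pmA[of 0 j 1 b] by simp
next
  case False
  assume "inS j b"
  then have "\<alpha> (- j) 1 * b = b" using False unfolding inS_def by simp
  moreover have "pm 0 j 1 b = \<alpha> (- j) 1 * b" by (rule RD[of _ 0 _ "- j"]) (use False in simp_all)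
  ultimately show ?thesis by simp
qed

lemma pm_unit_r: "inS i a \<Longrightarrow> pm i 0 a 1 = a"
proof (cases "0 \<le> i")
  case True
  assume "inS i a"
  then show ?thesis using True pmA[of i 0 a 1] unfolding inS_def by simp
next
  case False
  have "pm i 0 a 1 = \<alpha> 0 a * 1" by (rule RD[of _ "- i" _ 0]) (use False in simp_all)
  then show ?thesis by simp
qed

lemma pm_zero_l[simp]: "pm i j 0 b = 0"
  by (cases rule: pm_regions[of i j]) auto

lemma pm_zero_r[simp]: "pm i j a 0 = 0"
  by (cases rule: pm_regions[of i j]) auto

lemma bl_pm_l: "bounded_linear (\<lambda>a. pm i j a b)"
proof (cases rule: pm_regions[of i j])
  case A then show ?thesis by (simp add: bounded_linear_mult_left)
next
  case B then show ?thesis by (simp add: bounded_linear_mult_left)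
next
  case C
  have "bounded_linear (\<lambda>a. \<alpha> (- (i + j)) a * b)"
    using bounded_linear_compose[OF bounded_linear_mult_left bl_alpha[OF C(3)]] by (simp add: o_def)
  then show ?thesis using C by simp
next
  case D
  have "bounded_linear (\<lambda>a. \<alpha> (- j) a * b)"
    using bounded_linear_compose[OF bounded_linear_mult_left bl_alpha[OF D(2)]] by (simp add: o_def)
  then show ?thesis using D by simp
next
  case E1
  have "bounded_linear (\<lambda>a. L (- i) (a * b))"
    using bounded_linear_compose[OF bl_L[OF E1(1)] bounded_linear_mult_left] by (simp add: o_def)
  then show ?thesis using E1 by simp
next
  case E2
  have "bounded_linear (\<lambda>a. L j (a * b))"
    using bounded_linear_compose[OF bl_L[OF E2(2)] bounded_linear_mult_left] by (simp add: o_def)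
  then show ?thesis using E2 by simp
qed

lemma bl_pm_r: "bounded_linear (\<lambda>b. pm i j a b)"
proof (cases rule: pm_regions[of i j])
  case A
  have "bounded_linear (\<lambda>b. a * \<alpha> i b)"
    using bounded_linear_compose[OF bounded_linear_mult_right bl_alpha[OF A(1)]] by (simp add: o_def)
  then show ?thesis using A by simp
next
  case B
  have "bounded_linear (\<lambda>b. a * \<alpha> (i + j) b)"
    using bounded_linear_compose[OF bounded_linear_mult_right bl_alpha[OF B(3)]] by (simp add: o_def)
  then show ?thesis using B by simp
next
  case C then show ?thesis by (simp add: bounded_linear_mult_right)
next
  case D then show ?thesis by (simp add: bounded_linear_mult_right)
next
  case E1
  have "bounded_linear (\<lambda>b. L (- i) (a * b))"
    using bounded_linear_compose[OF bl_L[OF E1(1)] bounded_linear_mult_right] by (simp add: o_def)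
  then show ?thesis using E1 by simp
next
  case E2
  have "bounded_linear (\<lambda>b. L j (a * b))"
    using bounded_linear_compose[OF bl_L[OF E2(2)] bounded_linear_mult_right] by (simp add: o_def)
  then show ?thesis using E2 by simp
qed

lemma pm_sc_l: "pm i j (sc c a) b = sc c (pm i j a b)"
  by (cases rule: pm_regions[of i j]) (auto simp: sc_multl[symmetric] alpha_sc L_sc)

lemma pm_sc_r: "pm i j a (sc c b) = sc c (pm i j a b)"
  by (cases rule: pm_regions[of i j]) (auto simp: sc_multr[symmetric] alpha_sc L_sc)

end




lemma infsum_bl:
  assumes "bounded_linear h" and "f summable_on A"
  shows "infsum (\<lambda>x. h (f x)) A = h (infsum f A)"
  using has_sum_bounded_linear[OF assms(1) has_sum_infsum[OF assms(2)]] by (simp add: infsumI)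

lemma summable_bl:
  assumes "bounded_linear h" and "f summable_on A"
  shows "(\<lambda>x. h (f x)) summable_on A"
  using summable_on_bounded_linear[OF assms] .

lemma prod_summable:
  fixes u v :: "'b \<Rightarrow> real"
  assumes u: "u summable_on UNIV" and v: "v summable_on UNIV"
    and u0: "\<And>x. 0 \<le> u x" and v0: "\<And>x. 0 \<le> v x"
  shows "(\<lambda>(x, y). u x * v y) summable_on UNIV"
    and "infsum (\<lambda>(x, y). u x * v y) UNIV = infsum u UNIV * infsum v UNIV"
proof -
  have h: "((\<lambda>y. u x * v y) has_sum u x * infsum v UNIV) UNIV" for x
    by (rule has_sum_cmult_right) (use v in simp)
  have s: "(\<lambda>x. u x * infsum v UNIV) summable_on UNIV"
    using summable_on_cmult_left[OF u] .
  have "(\<lambda>p. u (fst p) * v (snd p)) summable_on Sigma UNIV (\<lambda>_. UNIV)"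
    by (rule summable_on_SigmaI[where g="\<lambda>x. u x * infsum v UNIV"]) (use h s u0 v0 in auto)
  then show S: "(\<lambda>(x, y). u x * v y) summable_on UNIV"
    by (simp add: case_prod_unfold)
  have "infsum (\<lambda>(x, y). u x * v y) UNIV = infsum (\<lambda>x. infsum (\<lambda>y. u x * v y) UNIV) UNIV"
    using infsum_Sigma'_banach[of "\<lambda>x y. u x * v y" UNIV "\<lambda>_. UNIV"] S
    by simp
  also have "\<dots> = infsum (\<lambda>x. u x * infsum v UNIV) UNIV" by (rule infsum_cong) (rule infsumI[OF h])
  also have "\<dots> = infsum u UNIV * infsum v UNIV" by (rule infsum_cmult_left')
  finally show "infsum (\<lambda>(x, y). u x * v y) UNIV = infsum u UNIV * infsum v UNIV" .
qed

lemma conv_summable: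
  fixes u v :: "'g::ab_group_add \<Rightarrow> real"
  assumes u: "u summable_on UNIV" and v: "v summable_on UNIV"
    and u0: "\<And>x. 0 \<le> u x" and v0: "\<And>x. 0 \<le> v x"
  shows "(\<lambda>(g, i). u i * v (g - i)) summable_on UNIV"
    and "infsum (\<lambda>(g, i). u i * v (g - i)) UNIV = infsum u UNIV * infsum v UNIV"
proof -
  let ?F = "\<lambda>(x, y). u x * v y"
  have r1: "(\<lambda>(g, i). u i * v (g - i)) summable_on UNIV \<longleftrightarrow> ?F summable_on UNIV"
    by (rule summable_on_reindex_bij_witness[where j="\<lambda>(g, i). (i, g - i)" and i="\<lambda>(i, j). (i + j, i)"])
       auto
  have r2: "infsum (\<lambda>(g, i). u i * v (g - i)) UNIV = infsum ?F UNIV"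
    by (rule infsum_reindex_bij_witness[where j="\<lambda>(g, i). (i, g - i)" and i="\<lambda>(i, j). (i + j, i)"])
       auto
  show "(\<lambda>(g, i). u i * v (g - i)) summable_on UNIV"
    unfolding r1 by (rule prod_summable(1)[OF assms])
  show "infsum (\<lambda>(g, i). u i * v (g - i)) UNIV = infsum u UNIV * infsum v UNIV"
    unfolding r2 by (rule prod_summable(2)[OF assms])
qed

context l1ctx
begin

lemma l1_set_iff: "a \<in> l1_set \<alpha> \<longleftrightarrow> (\<forall>g. inS g (a g)) \<and> (\<lambda>g. norm (a g)) summable_on UNIV"
proof
  assume a: "a \<in> l1_set \<alpha>"
  have "inS g (a g)" for g
  proof (unfold inS_def, intro conjI impI)
    assume g: "0 \<le> g"
    then obtain c where "a g = c * \<alpha> g 1" using a unfolding l1_set_def by blast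
    then show "a g * \<alpha> g 1 = a g" using p_idem[OF g] by (simp add: mult.assoc)
  next
    assume g: "g \<le> 0"
    then have g': "0 \<le> - g" by simp
    then obtain c where "a (- (- g)) = \<alpha> (- g) 1 * c" using a unfolding l1_set_def by blast
    then show "\<alpha> (- g) 1 * a g = a g" using p_idem[OF g'] by (simp add: mult.assoc[symmetric])
  qed
  then show "(\<forall>g. inS g (a g)) \<and> (\<lambda>g. norm (a g)) summable_on UNIV" using a unfolding l1_set_def by blast
next
  assume h: "(\<forall>g. inS g (a g)) \<and> (\<lambda>g. norm (a g)) summable_on UNIV"
  have "a x \<in> {c * \<alpha> x 1 |c. True} \<and> a (- x) \<in> {\<alpha> x 1 * c |c. True}" if x: "0 \<le> x" for x
  proof -
    have "a x * \<alpha> x 1 = a x" using h x unfolding inS_def by auto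
    moreover have "\<alpha> x 1 * a (- x) = a (- x)" using h x unfolding inS_def
      by (metis minus_minus neg_le_0_iff_le)
    ultimately show ?thesis by (metis (mono_tags, lifting) mem_Collect_eq)
  qed
  then show "a \<in> l1_set \<alpha>" using h unfolding l1_set_def by blast
qed

lemma l1_inS: "a \<in> l1_set \<alpha> \<Longrightarrow> inS g (a g)"
  and l1_summable: "a \<in> l1_set \<alpha> \<Longrightarrow> (\<lambda>g. norm (a g)) summable_on UNIV"
  using l1_set_iff by auto

lemma l1_norm_nonneg: "0 \<le> l1_norm a"
  unfolding l1_norm_def by (rule infsum_nonneg) simp

lemma norm_le_l1: "a \<in> l1_set \<alpha> \<Longrightarrow> norm (a g) \<le> l1_norm a"
  unfolding l1_norm_def using finite_sum_le_infsum[OF l1_summable, of a "{g}"] by simp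

lemma inS_closed_sum:
  assumes "\<And>x. x \<in> A \<Longrightarrow> inS g (f x)" and "f summable_on A"
  shows "inS g (infsum f A)"
proof (unfold inS_def, intro conjI impI)
  assume g: "0 \<le> g"
  have "infsum f A * \<alpha> g 1 = infsum (\<lambda>x. f x * \<alpha> g 1) A"
    by (rule infsum_bl[OF bounded_linear_mult_left assms(2), symmetric])
  also have "\<dots> = infsum f A" using assms(1) g by (intro infsum_cong) (simp add: inS_def)
  finally show "infsum f A * \<alpha> g 1 = infsum f A" .
next
  assume g: "g \<le> 0"
  have "\<alpha> (- g) 1 * infsum f A = infsum (\<lambda>x. \<alpha> (- g) 1 * f x) A"
    by (rule infsum_bl[OF bounded_linear_mult_right assms(2), symmetric])
  also have "\<dots> = infsum f A" using assms(1) g by (intro infsum_cong) (simp add: inS_def)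
  finally show "\<alpha> (- g) 1 * infsum f A = infsum f A" .
qed

end




context l1ctx
begin

definition cv :: "('g \<Rightarrow> 'a) \<Rightarrow> ('g \<Rightarrow> 'a) \<Rightarrow> 'g \<Rightarrow> 'a" where
  "cv a b g = infsum (\<lambda>i. pm i (g - i) (a i) (b (g - i))) UNIV"

lemma F_bound:
  assumes "a \<in> l1_set \<alpha>" "b \<in> l1_set \<alpha>"
  shows "norm (pm i (g - i) (a i) (b (g - i))) \<le> norm (a i) * norm (b (g - i))"
  by (rule pm_norm) (use assms l1_inS in auto)

lemma F_summable2:
  assumes a: "a \<in> l1_set \<alpha>" and b: "b \<in> l1_set \<alpha>"
  shows "(\<lambda>(g, i). pm i (g - i) (a i) (b (g - i))) summable_on UNIV"
    and "(\<lambda>(g, i). norm (pm i (g - i) (a i) (b (g - i)))) summable_on UNIV"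
proof -
  have cs: "(\<lambda>(g, i). norm (a i) * norm (b (g - i))) summable_on UNIV"
    by (rule conv_summable(1)) (use l1_summable[OF a] l1_summable[OF b] in auto)
  show n: "(\<lambda>(g, i). norm (pm i (g - i) (a i) (b (g - i)))) summable_on UNIV"
    by (rule summable_on_comparison_test[OF cs]) (use F_bound[OF a b] in auto)
  show "(\<lambda>(g, i). pm i (g - i) (a i) (b (g - i))) summable_on UNIV"
    by (rule abs_summable_summable) (use n in \<open>simp add: case_prod_unfold\<close>)
qed

lemma F_summable1:
  assumes a: "a \<in> l1_set \<alpha>" and b: "b \<in> l1_set \<alpha>"
  shows "(\<lambda>i. norm (pm i (g - i) (a i) (b (g - i)))) summable_on UNIV"
    and "(\<lambda>i. pm i (g - i) (a i) (b (g - i))) summable_on UNIV"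
proof -
  have cs: "(\<lambda>i. norm (a i) * l1_norm b) summable_on UNIV"
    by (rule summable_on_cmult_left) (rule l1_summable[OF a])
  show n: "(\<lambda>i. norm (pm i (g - i) (a i) (b (g - i)))) summable_on UNIV"
  proof (rule summable_on_comparison_test[OF cs])
    fix i
    show "norm (pm i (g - i) (a i) (b (g - i))) \<le> norm (a i) * l1_norm b"
      by (rule order_trans[OF F_bound[OF a b]]) (intro mult_left_mono norm_le_l1 b; simp)
  qed simp
  show "(\<lambda>i. pm i (g - i) (a i) (b (g - i))) summable_on UNIV"
    by (rule abs_summable_summable) (use n in simp)
qed

lemma l1_mult_eq:
  assumes a: "a \<in> l1_set \<alpha>" and b: "b \<in> l1_set \<alpha>"
  shows "l1_mult \<alpha> L a b g = cv a b g"
proof -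
  let ?F = "\<lambda>i. pm i (g - i) (a i) (b (g - i))"
  have sF: "?F summable_on A" for A
    using summable_on_subset_banach[OF F_summable1(2)[OF a b]] by blast
  show ?thesis
  proof (cases "0 \<le> g")
    case g: True
    let ?A1 = "{i::'g. g < i}" and ?A2 = "{i::'g. i < 0}" and ?A3 = "{i::'g. 0 \<le> i \<and> i \<le> g}"
    have U: "UNIV = ?A1 \<union> (?A2 \<union> ?A3)" by auto
    have d1: "?A1 \<inter> (?A2 \<union> ?A3) = {}" using g by auto
    have d2: "?A2 \<inter> ?A3 = {}" by auto
    have "cv a b g = infsum ?F ?A1 + (infsum ?F ?A2 + infsum ?F ?A3)"
      unfolding cv_def by (subst U, subst infsum_Un_disjoint[OF sF sF d1], subst infsum_Un_disjoint[OF sF sF d2]) simp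
    moreover have "infsum ?F ?A1 = infsum (\<lambda>(x,y). a x * \<alpha> (x - y) (b (-y))) {(x,y). 0 < x \<and> 0 < y \<and> g = x - y}"
    proof (rule infsum_reindex_bij_witness[where j="\<lambda>i. (i, i - g)" and i=fst])
      fix i assume "i \<in> ?A1"
      then have gi: "g < i" by simp
      then show "(i, i - g) \<in> {(x,y). 0 < x \<and> 0 < y \<and> g = x - y}" using g by auto
      have i0: "0 \<le> i" using g gi by (meson less_imp_le order_trans)
      have "?F i = a i * \<alpha> g (b (g - i))"
        by (rule RB[of _ _ "i - g"]) (use i0 g less_imp_le[OF gi] in simp_all)
      then show "(case (i, i - g) of (x, y) \<Rightarrow> a x * \<alpha> (x - y) (b (- y))) = ?F i" by simp
    qed auto
    moreover have "infsum ?F ?A2 = infsum (\<lambda>(x,y). L x (a (-x) * b y)) {(x,y). 0 < x \<and> 0 < y \<and> g = y - x}"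
    proof (rule infsum_reindex_bij_witness[where j="\<lambda>i. (- i, g - i)" and i="\<lambda>p. - fst p"])
      fix i assume "i \<in> ?A2"
      then have gi: "i < 0" by simp
      then show "(- i, g - i) \<in> {(x,y). 0 < x \<and> 0 < y \<and> g = y - x}" using g by auto
      have "?F i = L (- i) (a i * b (g - i))"
        by (rule RE1[of _ _ _ g]) (use g less_imp_le[OF gi] in \<open>simp_all add: algebra_simps\<close>)
      then show "(case (- i, g - i) of (x, y) \<Rightarrow> L x (a (- x) * b y)) = ?F i" by simp
    qed auto
    moreover have "infsum ?F ?A3 = infsum (\<lambda>(x,y). a x * \<alpha> x (b y)) {(x,y). 0 \<le> x \<and> 0 \<le> y \<and> g = x + y}"
    proof (rule infsum_reindex_bij_witness[where j="\<lambda>i. (i, g - i)" and i=fst])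
      fix i assume "i \<in> ?A3"
      then have gi: "0 \<le> i" "i \<le> g" by auto
      then show "(i, g - i) \<in> {(x,y). 0 \<le> x \<and> 0 \<le> y \<and> g = x + y}" by auto
      have "?F i = a i * \<alpha> i (b (g - i))" by (rule RA) (use gi in simp_all)
      then show "(case (i, g - i) of (x, y) \<Rightarrow> a x * \<alpha> x (b y)) = ?F i" by simp
    qed auto
    ultimately show ?thesis using g unfolding l1_mult_def by (simp add: add.assoc)
  next
    case g: False
    let ?A1 = "{i::'g. 0 < i}" and ?A2 = "{i::'g. i < g}" and ?A3 = "{i::'g. g \<le> i \<and> i \<le> 0}"
    have U: "UNIV = ?A1 \<union> (?A2 \<union> ?A3)" by auto
    have d1: "?A1 \<inter> (?A2 \<union> ?A3) = {}" using g by auto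
    have d2: "?A2 \<inter> ?A3 = {}" by auto
    have "cv a b g = infsum ?F ?A1 + (infsum ?F ?A2 + infsum ?F ?A3)"
      unfolding cv_def by (subst U, subst infsum_Un_disjoint[OF sF sF d1], subst infsum_Un_disjoint[OF sF sF d2]) simp
    moreover have "infsum ?F ?A1 = infsum (\<lambda>(x,y). \<alpha> (y - x) (a x) * b (-y)) {(x,y). 0 < x \<and> 0 < y \<and> g = x - y}"
    proof (rule infsum_reindex_bij_witness[where j="\<lambda>i. (i, i - g)" and i=fst])
      fix i assume "i \<in> ?A1"
      then have gi: "0 < i" by simp
      then show "(i, i - g) \<in> {(x,y). 0 < x \<and> 0 < y \<and> g = x - y}" using g by auto
      have gi': "g \<le> i" using g gi by (meson less_imp_le not_le order_trans)
      have "?F i = \<alpha> (- g) (a i) * b (g - i)"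
        by (rule RC[of _ _ "i - g"]) (use g gi' less_imp_le[OF gi] in simp_all)
      then show "(case (i, i - g) of (x, y) \<Rightarrow> \<alpha> (y - x) (a x) * b (- y)) = ?F i" by simp
    qed auto
    moreover have "infsum ?F ?A2 = infsum (\<lambda>(x,y). L y (a (-x) * b y)) {(x,y). 0 < x \<and> 0 < y \<and> g = y - x}"
    proof (rule infsum_reindex_bij_witness[where j="\<lambda>i. (- i, g - i)" and i="\<lambda>p. - fst p"])
      fix i assume "i \<in> ?A2"
      then have gi: "i < g" by simp
      then show "(- i, g - i) \<in> {(x,y). 0 < x \<and> 0 < y \<and> g = y - x}" using g by auto
      have "?F i = L (g - i) (a i * b (g - i))"
        by (rule RE2[of _ _ "- g"]) (use g less_imp_le[OF gi] in \<open>simp_all add: algebra_simps\<close>)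
      then show "(case (- i, g - i) of (x, y) \<Rightarrow> L y (a (- x) * b y)) = ?F i" by simp
    qed auto
    moreover have "infsum ?F ?A3 = infsum (\<lambda>(x,y). \<alpha> y (a (-x)) * b (-y)) {(x,y). 0 \<le> x \<and> 0 \<le> y \<and> g = - x - y}"
    proof (rule infsum_reindex_bij_witness[where j="\<lambda>i. (- i, i - g)" and i="\<lambda>p. - fst p"])
      fix i assume "i \<in> ?A3"
      then have gi: "g \<le> i" "i \<le> 0" by auto
      then show "(- i, i - g) \<in> {(x,y). 0 \<le> x \<and> 0 \<le> y \<and> g = - x - y}" by auto
      have "?F i = \<alpha> (i - g) (a i) * b (g - i)"
        by (rule RD[of _ "- i" _ "i - g"]) (use gi in simp_all)
      then show "(case (- i, i - g) of (x, y) \<Rightarrow> \<alpha> y (a (- x)) * b (- y)) = ?F i" by simp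
    qed auto
    ultimately show ?thesis using g unfolding l1_mult_def by (simp add: add.assoc)
  qed
qed

end




context l1ctx
begin

lemma cv_inS:
  assumes a: "a \<in> l1_set \<alpha>" and b: "b \<in> l1_set \<alpha>"
  shows "inS g (cv a b g)"
  unfolding cv_def
proof (rule inS_closed_sum)
  fix i
  show "inS g (pm i (g - i) (a i) (b (g - i)))"
    using pm_inS[OF l1_inS[OF a] l1_inS[OF b], of i "g - i"] by simp
qed (rule F_summable1(2)[OF a b])

lemma W_summable:
  assumes a: "a \<in> l1_set \<alpha>" and b: "b \<in> l1_set \<alpha>"
  shows "(\<lambda>i. norm (a i) * norm (b (g - i))) summable_on UNIV"
proof (rule summable_on_comparison_test[OF summable_on_cmult_left[OF l1_summable[OF a], of "l1_norm b"]])
  fix i show "norm (a i) * norm (b (g - i)) \<le> norm (a i) * l1_norm b"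
    by (intro mult_left_mono norm_le_l1 b) simp
qed simp

lemma cv_norm_le:
  assumes a: "a \<in> l1_set \<alpha>" and b: "b \<in> l1_set \<alpha>"
  shows "norm (cv a b g) \<le> infsum (\<lambda>i. norm (a i) * norm (b (g - i))) UNIV"
proof -
  have "norm (cv a b g) \<le> infsum (\<lambda>i. norm (pm i (g - i) (a i) (b (g - i)))) UNIV"
    unfolding cv_def by (rule norm_infsum_bound) (use F_summable1(1)[OF a b] in simp)
  also have "\<dots> \<le> infsum (\<lambda>i. norm (a i) * norm (b (g - i))) UNIV"
    by (rule infsum_mono[OF F_summable1(1)[OF a b] W_summable[OF a b]]) (rule F_bound[OF a b])
  finally show ?thesis .
qed

lemma cv_summable_norm:
  assumes a: "a \<in> l1_set \<alpha>" and b: "b \<in> l1_set \<alpha>"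
  shows "(\<lambda>g. norm (cv a b g)) summable_on UNIV"
    and "l1_norm (cv a b) \<le> l1_norm a * l1_norm b"
proof -
  have cs: "(\<lambda>(g, i). norm (a i) * norm (b (g - i))) summable_on UNIV"
    by (rule conv_summable(1)) (use l1_summable[OF a] l1_summable[OF b] in auto)
  have Ws: "(\<lambda>g. infsum (\<lambda>i. norm (a i) * norm (b (g - i))) UNIV) summable_on UNIV"
    using summable_on_Sigma_banach[of "\<lambda>g i. norm (a i) * norm (b (g - i))" UNIV "\<lambda>_. UNIV"] cs by simp
  show s: "(\<lambda>g. norm (cv a b g)) summable_on UNIV"
    by (rule summable_on_comparison_test[OF Ws]) (use cv_norm_le[OF a b] in auto)
  have "l1_norm (cv a b) \<le> infsum (\<lambda>g. infsum (\<lambda>i. norm (a i) * norm (b (g - i))) UNIV) UNIV"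
    unfolding l1_norm_def by (rule infsum_mono[OF s Ws]) (rule cv_norm_le[OF a b])
  also have "\<dots> = infsum (\<lambda>(g, i). norm (a i) * norm (b (g - i))) UNIV"
    using infsum_Sigma'_banach[of "\<lambda>g i. norm (a i) * norm (b (g - i))" UNIV "\<lambda>_. UNIV"] cs by simp
  also have "\<dots> = l1_norm a * l1_norm b"
    unfolding l1_norm_def by (rule conv_summable(2)) (use l1_summable[OF a] l1_summable[OF b] in auto)
  finally show "l1_norm (cv a b) \<le> l1_norm a * l1_norm b" .
qed

lemma cv_l1:
  assumes a: "a \<in> l1_set \<alpha>" and b: "b \<in> l1_set \<alpha>"
  shows "cv a b \<in> l1_set \<alpha>"
  unfolding l1_set_iff using cv_inS[OF a b] cv_summable_norm(1)[OF a b] by blast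

lemma cv_assoc:
  assumes a: "a \<in> l1_set \<alpha>" and b: "b \<in> l1_set \<alpha>" and c: "c \<in> l1_set \<alpha>"
  shows "cv (cv a b) c g = cv a (cv b c) g"
proof -
  define G where "G h i = pm h (g - h) (pm i (h - i) (a i) (b (h - i))) (c (g - h))" for h i
  have Gb: "norm (G h i) \<le> norm (a i) * norm (b (h - i)) * l1_norm c" for h i
  proof -
    have "norm (G h i) \<le> norm (pm i (h - i) (a i) (b (h - i))) * norm (c (g - h))"
      unfolding G_def
      by (rule pm_norm) (use pm_inS[OF l1_inS[OF a] l1_inS[OF b], of i "h - i"] l1_inS[OF c] in auto)
    also have "\<dots> \<le> (norm (a i) * norm (b (h - i))) * l1_norm c"
      by (intro mult_mono F_bound[OF a b, of i h] norm_le_l1 c) auto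
    finally show ?thesis .
  qed
  have cs: "(\<lambda>(h, i). norm (a i) * norm (b (h - i)) * l1_norm c) summable_on UNIV"
    using summable_on_cmult_left[OF conv_summable(1)[of "\<lambda>i. norm (a i)" "\<lambda>i. norm (b i)"], of "l1_norm c"]
      l1_summable[OF a] l1_summable[OF b] by (simp add: case_prod_unfold)
  have Gs: "(\<lambda>(h, i). G h i) summable_on UNIV"
  proof (rule abs_summable_summable)
    show "(\<lambda>(h, i). G h i) abs_summable_on UNIV"
      using summable_on_comparison_test[OF cs, of "\<lambda>(h, i). norm (G h i)"] Gb
      by (auto simp: case_prod_unfold)
  qed
  have "cv (cv a b) c g = infsum (\<lambda>h. pm h (g - h) (cv a b h) (c (g - h))) UNIV" by (simp add: cv_def)
  also have "\<dots> = infsum (\<lambda>h. infsum (\<lambda>i. G h i) UNIV) UNIV"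
  proof (rule infsum_cong)
    fix h
    show "pm h (g - h) (cv a b h) (c (g - h)) = infsum (\<lambda>i. G h i) UNIV"
      unfolding cv_def G_def
      by (rule infsum_bl[OF bl_pm_l F_summable1(2)[OF a b], symmetric])
  qed
  also have "\<dots> = infsum (\<lambda>i. infsum (\<lambda>h. G h i) UNIV) UNIV"
    by (rule infsum_swap_banach) (use Gs in simp)
  also have "\<dots> = infsum (\<lambda>i. infsum (\<lambda>j. pm i (g - i) (a i) (pm j (g - i - j) (b j) (c (g - i - j)))) UNIV) UNIV"
  proof (rule infsum_cong)
    fix i
    show "infsum (\<lambda>h. G h i) UNIV = infsum (\<lambda>j. pm i (g - i) (a i) (pm j (g - i - j) (b j) (c (g - i - j)))) UNIV"
    proof (rule infsum_reindex_bij_witness[where j="\<lambda>h. h - i" and i="\<lambda>j. i + j"])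
      fix h
      have e1: "g - i - (h - i) = g - h" and e2: "h - i + (g - h) = g - i" by (simp_all add: algebra_simps)
      have "G h i = pm (i + (h - i)) (g - i - (h - i)) (pm i (h - i) (a i) (b (h - i))) (c (g - i - (h - i)))"
        unfolding G_def e1 by simp
      also have "\<dots> = pm i ((h - i) + (g - i - (h - i))) (a i) (pm (h - i) (g - i - (h - i)) (b (h - i)) (c (g - i - (h - i))))"
        by (rule pm_assoc) (use l1_inS[OF a] l1_inS[OF b] l1_inS[OF c] in auto)
      finally show "pm i (g - i) (a i) (pm (h - i) (g - i - (h - i)) (b (h - i)) (c (g - i - (h - i)))) = G h i"
        by (simp add: e1 e2)
    qed auto
  qed
  also have "\<dots> = infsum (\<lambda>i. pm i (g - i) (a i) (cv b c (g - i))) UNIV"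
  proof (rule infsum_cong)
    fix i
    show "infsum (\<lambda>j. pm i (g - i) (a i) (pm j (g - i - j) (b j) (c (g - i - j)))) UNIV = pm i (g - i) (a i) (cv b c (g - i))"
      unfolding cv_def by (rule infsum_bl[OF bl_pm_r F_summable1(2)[OF b c]])
  qed
  also have "\<dots> = cv a (cv b c) g" by (simp add: cv_def)
  finally show ?thesis .
qed

end




context l1ctx
begin

lemma mult_cv: "a \<in> l1_set \<alpha> \<Longrightarrow> b \<in> l1_set \<alpha> \<Longrightarrow> l1_mult \<alpha> L a b = cv a b"
  using l1_mult_eq by blast

lemma inS_add: "inS g x \<Longrightarrow> inS g y \<Longrightarrow> inS g (x + y)"
  unfolding inS_def by (auto simp: distrib_left distrib_right)

lemma inS_sc: "inS g x \<Longrightarrow> inS g (sc c x)"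
  unfolding inS_def by (auto simp: sc_multl[symmetric] sc_multr[symmetric])

lemma inS_zero: "inS g 0"
  unfolding inS_def by simp

lemma zero_in: "l1_zero \<in> l1_set \<alpha>"
  unfolding l1_set_iff l1_zero_def by (simp add: inS_zero)

lemma unit_in: "l1_unit \<in> l1_set \<alpha>"
  unfolding l1_set_iff
proof
  show "\<forall>g. inS g (l1_unit g)" unfolding l1_unit_def inS_def by simp
  show "(\<lambda>g. norm (l1_unit g :: 'a)) summable_on UNIV"
    by (rule finite_nonzero_values_imp_summable_on) (simp add: l1_unit_def)
qed

lemma add_in:
  assumes a: "a \<in> l1_set \<alpha>" and b: "b \<in> l1_set \<alpha>"
  shows "l1_add a b \<in> l1_set \<alpha>"
  unfolding l1_set_iff l1_add_def
proof
  show "\<forall>g. inS g (a g + b g)" using l1_inS[OF a] l1_inS[OF b] inS_add by blast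
  show "(\<lambda>g. norm (a g + b g)) summable_on UNIV"
    by (rule summable_on_comparison_test[OF summable_on_add[OF l1_summable[OF a] l1_summable[OF b]]])
       (auto intro: norm_triangle_ineq)
qed

lemma sc_in:
  assumes a: "a \<in> l1_set \<alpha>"
  shows "l1_scale sc c a \<in> l1_set \<alpha>"
  unfolding l1_set_iff l1_scale_def
proof
  show "\<forall>g. inS g (sc c (a g))" using l1_inS[OF a] inS_sc by blast
  show "(\<lambda>g. norm (sc c (a g))) summable_on UNIV"
    using summable_on_cmult_right[OF l1_summable[OF a], of "cmod c"] by (simp add: sc_norm)
qed

lemma norm_neg_reindex: "infsum (\<lambda>g. f (- g)) UNIV = infsum f (UNIV :: 'g set)"
  by (rule infsum_reindex_bij_witness[where j=uminus and i=uminus]) auto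

lemma summable_neg_reindex: "(\<lambda>g. f (- g)) summable_on UNIV \<longleftrightarrow> f summable_on (UNIV :: 'g set)"
  by (rule summable_on_reindex_bij_witness[where j=uminus and i=uminus]) auto

lemma st_in:
  assumes a: "a \<in> l1_set \<alpha>"
  shows "l1_star st a \<in> l1_set \<alpha>"
  unfolding l1_set_iff l1_star_def
proof
  show "\<forall>g. inS g (st (a (- g)))"
  proof
    fix g
    have h: "inS (- g) (a (- g))" by (rule l1_inS[OF a])
    show "inS g (st (a (- g)))" unfolding inS_def
    proof (intro conjI impI)
      assume "0 \<le> g" then have "\<alpha> g 1 * a (- g) = a (- g)" using h unfolding inS_def by simp
      then show "st (a (- g)) * \<alpha> g 1 = st (a (- g))"
        using arg_cong[of _ _ st] st_mult p_sa \<open>0 \<le> g\<close> by metis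
    next
      assume g: "g \<le> 0" then have "a (- g) * \<alpha> (- g) 1 = a (- g)" using h unfolding inS_def by simp
      then show "\<alpha> (- g) 1 * st (a (- g)) = st (a (- g))"
        using arg_cong[of _ _ st] st_mult p_sa g by (metis neg_0_le_iff_le)
    qed
  qed
  show "(\<lambda>g. norm (st (a (- g)))) summable_on UNIV"
    using summable_neg_reindex[of "\<lambda>g. norm (a g)"] l1_summable[OF a] by simp
qed

lemma nrm_zero_iff:
  assumes a: "a \<in> l1_set \<alpha>"
  shows "l1_norm a = 0 \<longleftrightarrow> a = l1_zero"
proof
  assume h: "l1_norm a = 0"
  have "norm (a g) = 0" for g
    by (rule nonneg_infsum_le_0D[where A=UNIV]) (use h l1_summable[OF a] in \<open>auto simp: l1_norm_def\<close>)
  then show "a = l1_zero" unfolding l1_zero_def by auto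
qed (simp add: l1_norm_def l1_zero_def)

lemma nrm_triangle:
  assumes a: "a \<in> l1_set \<alpha>" and b: "b \<in> l1_set \<alpha>"
  shows "l1_norm (l1_add a b) \<le> l1_norm a + l1_norm b"
proof -
  have "l1_norm (l1_add a b) \<le> infsum (\<lambda>g. norm (a g) + norm (b g)) UNIV"
    unfolding l1_norm_def l1_add_def
    by (rule infsum_mono[OF l1_summable[OF add_in[OF a b], unfolded l1_add_def]
          summable_on_add[OF l1_summable[OF a] l1_summable[OF b]]]) (rule norm_triangle_ineq)
  also have "\<dots> = l1_norm a + l1_norm b"
    unfolding l1_norm_def by (rule infsum_add[OF l1_summable[OF a] l1_summable[OF b]])
  finally show ?thesis .
qed

lemma nrm_sc: "l1_norm (l1_scale sc c a) = cmod c * l1_norm a"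
  unfolding l1_norm_def l1_scale_def sc_norm by (rule infsum_cmult_right')

lemma nrm_one: "l1_norm (l1_unit :: 'g \<Rightarrow> 'a) = 1"
proof -
  have "l1_norm (l1_unit :: 'g \<Rightarrow> 'a) = infsum (\<lambda>g. norm (l1_unit g :: 'a)) {0::'g}"
    unfolding l1_norm_def by (rule infsum_cong_neutral) (auto simp: l1_unit_def)
  then show ?thesis by (simp add: l1_unit_def)
qed

lemma nrm_st:
  assumes a: "a \<in> l1_set \<alpha>"
  shows "l1_norm (l1_star st a) = l1_norm a"
  unfolding l1_norm_def l1_star_def using norm_neg_reindex[of "\<lambda>g. norm (a g)"] by simp

lemma cv_unit_l:
  assumes a: "a \<in> l1_set \<alpha>"
  shows "cv l1_unit a g = a g"
proof -
  have "cv l1_unit a g = infsum (\<lambda>i. pm i (g - i) (l1_unit i) (a (g - i))) {0}"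
    unfolding cv_def by (rule infsum_cong_neutral) (auto simp: l1_unit_def)
  then show ?thesis using pm_unit_l[OF l1_inS[OF a]] by (simp add: l1_unit_def)
qed

lemma cv_unit_r:
  assumes a: "a \<in> l1_set \<alpha>"
  shows "cv a l1_unit g = a g"
proof -
  have "cv a l1_unit g = infsum (\<lambda>i. pm i (g - i) (a i) (l1_unit (g - i))) {g}"
    unfolding cv_def by (rule infsum_cong_neutral) (auto simp: l1_unit_def)
  then show ?thesis using pm_unit_r[OF l1_inS[OF a]] by (simp add: l1_unit_def)
qed

lemma pm_add_r: "pm i j a (b + b') = pm i j a b + pm i j a b'"
  using linear_add[OF bounded_linear.linear[OF bl_pm_r]] by blast

lemma pm_add_l: "pm i j (a + a') b = pm i j a b + pm i j a' b"
  using linear_add[OF bounded_linear.linear[OF bl_pm_l]] by blast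

lemma cv_add_r:
  assumes a: "a \<in> l1_set \<alpha>" and b: "b \<in> l1_set \<alpha>" and d: "d \<in> l1_set \<alpha>"
  shows "cv a (l1_add b d) g = cv a b g + cv a d g"
  unfolding cv_def l1_add_def pm_add_r
  by (rule infsum_add[OF F_summable1(2)[OF a b] F_summable1(2)[OF a d]])

lemma cv_add_l:
  assumes a: "a \<in> l1_set \<alpha>" and b: "b \<in> l1_set \<alpha>" and d: "d \<in> l1_set \<alpha>"
  shows "cv (l1_add a b) d g = cv a d g + cv b d g"
  unfolding cv_def l1_add_def pm_add_l
  by (rule infsum_add[OF F_summable1(2)[OF a d] F_summable1(2)[OF b d]])

lemma cv_sc_l:
  assumes a: "a \<in> l1_set \<alpha>" and b: "b \<in> l1_set \<alpha>"
  shows "sc c (cv a b g) = cv (l1_scale sc c a) b g"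
  unfolding cv_def l1_scale_def pm_sc_l
  by (rule infsum_bl[OF bl_sc F_summable1(2)[OF a b], symmetric])

lemma cv_sc_r:
  assumes a: "a \<in> l1_set \<alpha>" and b: "b \<in> l1_set \<alpha>"
  shows "sc c (cv a b g) = cv a (l1_scale sc c b) g"
  unfolding cv_def l1_scale_def pm_sc_r
  by (rule infsum_bl[OF bl_sc F_summable1(2)[OF a b], symmetric])

lemma cv_st:
  assumes a: "a \<in> l1_set \<alpha>" and b: "b \<in> l1_set \<alpha>"
  shows "st (cv a b (- g)) = cv (l1_star st b) (l1_star st a) g"
proof -
  have "st (cv a b (- g)) = infsum (\<lambda>i. st (pm i (- g - i) (a i) (b (- g - i)))) UNIV"
    unfolding cv_def by (rule infsum_bl[OF bl_st F_summable1(2)[OF a b], symmetric])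
  also have "\<dots> = infsum (\<lambda>i. pm (g + i) (- i) (st (b (- (g + i)))) (st (a i))) UNIV"
  proof -
    have e1: "- (- g - i) = g + i" and e2: "- g - i = - (g + i)" for i by (simp_all add: algebra_simps)
    have "st (pm i (- g - i) (a i) (b (- g - i))) = pm (g + i) (- i) (st (b (- (g + i)))) (st (a i))" for i
      using pm_st[of i "- g - i" "a i" "b (- g - i)"] by (simp only: e2 minus_minus)
    then show ?thesis by (intro infsum_cong)

  qed
  also have "\<dots> = cv (l1_star st b) (l1_star st a) g"
    unfolding cv_def l1_star_def
    by (rule infsum_reindex_bij_witness[where j="\<lambda>i. g + i" and i="\<lambda>k. k - g"]) (auto simp: algebra_simps)
  finally show ?thesis .
qed

end




context l1ctx
begin

lemma diff_fun: "l1_add x (l1_scale sc (-1) y) = (\<lambda>g. x g - y g)"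
  unfolding l1_add_def l1_scale_def by (simp add: sc_minus_one)

lemma complete_l1:
  assumes fS: "\<And>n. f n \<in> l1_set \<alpha>"
    and C: "\<forall>e>0. \<exists>N. \<forall>m\<ge>N. \<forall>n\<ge>N. l1_norm (l1_add (f m) (l1_scale sc (-1) (f n))) < e"
  shows "\<exists>l\<in>l1_set \<alpha>. (\<lambda>n. l1_norm (l1_add (f n) (l1_scale sc (-1) l))) \<longlonglongrightarrow> 0"
proof -
  have dS: "(\<lambda>g. norm (f m g - f n g)) summable_on UNIV" for m n
  proof -
    have "l1_add (f m) (l1_scale sc (-1) (f n)) \<in> l1_set \<alpha>" by (rule add_in[OF fS sc_in[OF fS]])
    from l1_summable[OF this] show ?thesis unfolding diff_fun .
  qed
  have nd: "l1_norm (l1_add (f m) (l1_scale sc (-1) (f n))) = infsum (\<lambda>g. norm (f m g - f n g)) UNIV" for m n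
    unfolding diff_fun l1_norm_def ..
  have fin: "sum (\<lambda>g. norm (f m g - f n g)) F \<le> l1_norm (l1_add (f m) (l1_scale sc (-1) (f n)))"
    if "finite F" for m n F
    unfolding nd by (rule finite_sum_le_infsum[OF dS that]) auto
  have pt: "norm (f m g - f n g) \<le> l1_norm (l1_add (f m) (l1_scale sc (-1) (f n)))" for m n g
    using fin[of "{g}" m n] by simp
  have cau: "Cauchy (\<lambda>n. f n g)" for g
  proof (rule CauchyI)
    fix e :: real assume "0 < e"
    then obtain N where N: "\<forall>m\<ge>N. \<forall>n\<ge>N. l1_norm (l1_add (f m) (l1_scale sc (-1) (f n))) < e"
      using C by blast
    show "\<exists>M. \<forall>m\<ge>M. \<forall>n\<ge>M. norm (f m g - f n g) < e"
      by (rule exI[of _ N]) (use N pt in \<open>meson le_less_trans\<close>)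
  qed
  define l where "l g = lim (\<lambda>n. f n g)" for g
  have lim: "(\<lambda>n. f n g) \<longlonglongrightarrow> l g" for g
    unfolding l_def using Cauchy_convergent[OF cau] convergent_LIMSEQ_iff by blast
  have bound: "\<exists>N. \<forall>n\<ge>N. (\<lambda>g. norm (l g - f n g)) summable_on UNIV \<and> infsum (\<lambda>g. norm (l g - f n g)) UNIV \<le> e"
    if e: "e > 0" for e
  proof -
    obtain N where N: "\<forall>m\<ge>N. \<forall>n\<ge>N. l1_norm (l1_add (f m) (l1_scale sc (-1) (f n))) < e"
      using C e by blast
    have sfin: "sum (\<lambda>g. norm (l g - f n g)) F \<le> e" if "finite F" "n \<ge> N" for F n
    proof (rule LIMSEQ_le_const2)
      show "(\<lambda>m. sum (\<lambda>g. norm (f m g - f n g)) F) \<longlonglongrightarrow> sum (\<lambda>g. norm (l g - f n g)) F"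
        by (intro tendsto_sum tendsto_norm tendsto_diff lim tendsto_const)
      show "\<exists>M. \<forall>m\<ge>M. sum (\<lambda>g. norm (f m g - f n g)) F \<le> e"
        by (rule exI[of _ N]) (use N fin[OF that(1)] that(2) in \<open>meson less_imp_le order_trans\<close>)
    qed
    show ?thesis
    proof (rule exI[of _ N], intro allI impI conjI)
      fix n assume n: "n \<ge> N"
      show s: "(\<lambda>g. norm (l g - f n g)) summable_on UNIV"
        by (rule nonneg_bdd_above_summable_on) (use sfin n in \<open>auto intro!: bdd_aboveI\<close>)
      show "infsum (\<lambda>g. norm (l g - f n g)) UNIV \<le> e"
        by (rule infsum_le_finite_sums[OF s]) (use sfin n in auto)
    qed
  qed
  have lS: "l \<in> l1_set \<alpha>"
    unfolding l1_set_iff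
  proof
    show "\<forall>g. inS g (l g)"
    proof
      fix g
      have i: "inS g (f n g)" for n by (rule l1_inS[OF fS])
      show "inS g (l g)" unfolding inS_def
      proof (intro conjI impI)
        assume g: "0 \<le> g"
        have "(\<lambda>n. f n g * \<alpha> g 1) \<longlonglongrightarrow> l g * \<alpha> g 1" by (intro tendsto_mult lim tendsto_const)
        moreover have "(\<lambda>n. f n g * \<alpha> g 1) = (\<lambda>n. f n g)" using i g unfolding inS_def by simp
        ultimately show "l g * \<alpha> g 1 = l g" using lim LIMSEQ_unique by metis
      next
        assume g: "g \<le> 0"
        have "(\<lambda>n. \<alpha> (- g) 1 * f n g) \<longlonglongrightarrow> \<alpha> (- g) 1 * l g" by (intro tendsto_mult lim tendsto_const)
        moreover have "(\<lambda>n. \<alpha> (- g) 1 * f n g) = (\<lambda>n. f n g)" using i g unfolding inS_def by simp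
        ultimately show "\<alpha> (- g) 1 * l g = l g" using lim LIMSEQ_unique by metis
      qed
    qed
    obtain N where N: "\<forall>n\<ge>N. (\<lambda>g. norm (l g - f n g)) summable_on UNIV"
      using bound[of 1] by auto
    show "(\<lambda>g. norm (l g)) summable_on UNIV"
    proof (rule summable_on_comparison_test[OF summable_on_add[OF N[rule_format, OF order_refl] l1_summable[OF fS[of N]]]])
      fix g show "norm (l g) \<le> norm (l g - f N g) + norm (f N g)"
        using norm_triangle_ineq[of "l g - f N g" "f N g"] by simp
    qed simp
  qed
  have "(\<lambda>n. l1_norm (l1_add (f n) (l1_scale sc (-1) l))) \<longlonglongrightarrow> 0"
  proof (rule LIMSEQ_I)
    fix r :: real assume r: "0 < r"
    obtain N where N: "\<forall>n\<ge>N. (\<lambda>g. norm (l g - f n g)) summable_on UNIV \<and> infsum (\<lambda>g. norm (l g - f n g)) UNIV \<le> r / 2"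
      using bound[of "r / 2"] r by auto
    show "\<exists>no. \<forall>n\<ge>no. norm (l1_norm (l1_add (f n) (l1_scale sc (-1) l)) - 0) < r"
    proof (rule exI[of _ N], intro allI impI)
      fix n assume n: "n \<ge> N"
      have "l1_norm (l1_add (f n) (l1_scale sc (-1) l)) = infsum (\<lambda>g. norm (l g - f n g)) UNIV"
        unfolding diff_fun l1_norm_def by (simp add: norm_minus_commute)
      then show "norm (l1_norm (l1_add (f n) (l1_scale sc (-1) l)) - 0) < r"
        using N n r l1_norm_nonneg[of "l1_add (f n) (l1_scale sc (-1) l)"] by auto
    qed
  qed
  then show ?thesis using lS by blast
qed

end




context l1ctx
begin

lemma main:
  "unital_banach_star_algebra (l1_set \<alpha>) l1_add l1_zero (l1_scale sc)
     (l1_mult \<alpha> L) (l1_star st) l1_norm l1_unit"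
proof -
  let ?S = "l1_set \<alpha>" and ?M = "l1_mult \<alpha> L"
  have f_zero: "l1_zero \<in> ?S" by (rule zero_in)
  have f_one: "l1_unit \<in> ?S" by (rule unit_in)
  have f_addmul: "\<forall>a\<in>?S. \<forall>b\<in>?S. l1_add a b \<in> ?S \<and> ?M a b \<in> ?S"
    by (auto simp: add_in mult_cv cv_l1)
  have f_sc: "\<forall>c. \<forall>a\<in>?S. l1_scale sc c a \<in> ?S" by (auto simp: sc_in)
  have f_st: "\<forall>a\<in>?S. l1_star st a \<in> ?S" by (auto simp: st_in)
  have f_aassoc: "\<forall>a\<in>?S. \<forall>b\<in>?S. \<forall>d\<in>?S. l1_add (l1_add a b) d = l1_add a (l1_add b d)"
    by (auto simp: l1_add_def add.assoc)
  have f_acomm: "\<forall>a\<in>?S. \<forall>b\<in>?S. l1_add a b = l1_add b a"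
    by (auto simp: l1_add_def add.commute)
  have f_a0: "\<forall>a\<in>?S. l1_add l1_zero a = a" by (auto simp: l1_add_def l1_zero_def)
  have f_neg: "\<forall>a\<in>?S. l1_add a (l1_scale sc (-1) a) = l1_zero"
    by (auto simp: diff_fun l1_zero_def)
  have f_sc1: "\<forall>a\<in>?S. l1_scale sc 1 a = a" by (auto simp: l1_scale_def)
  have f_scm: "\<forall>c d. \<forall>a\<in>?S. l1_scale sc (c * d) a = l1_scale sc c (l1_scale sc d a)"
    by (auto simp: l1_scale_def sc_mult)
  have f_scadd: "\<forall>c d. \<forall>a\<in>?S. l1_scale sc (c + d) a = l1_add (l1_scale sc c a) (l1_scale sc d a)"
    by (auto simp: l1_scale_def l1_add_def sc_add1)
  have f_scdist: "\<forall>c. \<forall>a\<in>?S. \<forall>b\<in>?S. l1_scale sc c (l1_add a b) = l1_add (l1_scale sc c a) (l1_scale sc c b)"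
    by (auto simp: l1_scale_def l1_add_def sc_add2)
  have f_nrm: "\<forall>a\<in>?S. 0 \<le> l1_norm a \<and> (l1_norm a = 0 \<longleftrightarrow> a = l1_zero)"
    by (auto simp: l1_norm_nonneg nrm_zero_iff)
  have f_tri: "\<forall>a\<in>?S. \<forall>b\<in>?S. l1_norm (l1_add a b) \<le> l1_norm a + l1_norm b"
    by (auto simp: nrm_triangle)
  have f_nsc: "\<forall>c. \<forall>a\<in>?S. l1_norm (l1_scale sc c a) = cmod c * l1_norm a"
    by (auto simp: nrm_sc)
  have f_complete: "\<forall>f. (\<forall>n. f n \<in> ?S) \<longrightarrow>
        (\<forall>e>0. \<exists>N. \<forall>m\<ge>N. \<forall>n\<ge>N. l1_norm (l1_add (f m) (l1_scale sc (-1) (f n))) < e) \<longrightarrow>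
        (\<exists>l\<in>?S. (\<lambda>n. l1_norm (l1_add (f n) (l1_scale sc (-1) l))) \<longlonglongrightarrow> 0)"
    using complete_l1 by blast
  have f_massoc: "\<forall>a\<in>?S. \<forall>b\<in>?S. \<forall>d\<in>?S. ?M (?M a b) d = ?M a (?M b d)"
    by (auto simp: mult_cv cv_l1 cv_assoc)
  have f_dl: "\<forall>a\<in>?S. \<forall>b\<in>?S. \<forall>d\<in>?S. ?M a (l1_add b d) = l1_add (?M a b) (?M a d)"
    by (auto simp: mult_cv add_in cv_add_r l1_add_def[of "cv _ _"])
  have f_dr: "\<forall>a\<in>?S. \<forall>b\<in>?S. \<forall>d\<in>?S. ?M (l1_add a b) d = l1_add (?M a d) (?M b d)"
    by (auto simp: mult_cv add_in cv_add_l l1_add_def[of "cv _ _"])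
  have f_scmul: "\<forall>c. \<forall>a\<in>?S. \<forall>b\<in>?S. l1_scale sc c (?M a b) = ?M (l1_scale sc c a) b \<and> l1_scale sc c (?M a b) = ?M a (l1_scale sc c b)"
  proof (intro allI ballI)
    fix c a b assume a: "a \<in> ?S" and b: "b \<in> ?S"
    have e1: "l1_scale sc c (cv a b) = cv (l1_scale sc c a) b"
      by (rule ext) (simp add: l1_scale_def cv_sc_l[OF a b, unfolded l1_scale_def])
    have e2: "l1_scale sc c (cv a b) = cv a (l1_scale sc c b)"
      by (rule ext) (simp add: l1_scale_def cv_sc_r[OF a b, unfolded l1_scale_def])
    show "l1_scale sc c (?M a b) = ?M (l1_scale sc c a) b \<and> l1_scale sc c (?M a b) = ?M a (l1_scale sc c b)"
      using e1 e2 a b sc_in[OF a] sc_in[OF b] by (simp add: mult_cv)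
  qed
  have f_nmul: "\<forall>a\<in>?S. \<forall>b\<in>?S. l1_norm (?M a b) \<le> l1_norm a * l1_norm b"
    by (auto simp: mult_cv cv_summable_norm(2))
  have f_unit: "\<forall>a\<in>?S. ?M l1_unit a = a \<and> ?M a l1_unit = a"
    by (auto simp: mult_cv unit_in cv_unit_l cv_unit_r)
  have f_n1: "l1_norm (l1_unit :: 'g \<Rightarrow> 'a) = 1" by (rule nrm_one)
  have f_stadd: "\<forall>a\<in>?S. \<forall>b\<in>?S. l1_star st (l1_add a b) = l1_add (l1_star st a) (l1_star st b)"
    by (auto simp: l1_star_def l1_add_def st_add)
  have f_stsc: "\<forall>c. \<forall>a\<in>?S. l1_star st (l1_scale sc c a) = l1_scale sc (cnj c) (l1_star st a)"
    by (auto simp: l1_star_def l1_scale_def st_sc)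
  have f_stmul: "\<forall>a\<in>?S. \<forall>b\<in>?S. l1_star st (?M a b) = ?M (l1_star st b) (l1_star st a)"
    by (auto simp: mult_cv st_in l1_star_def[of st "cv _ _"] cv_st)
  have f_stst: "\<forall>a\<in>?S. l1_star st (l1_star st a) = a" by (auto simp: l1_star_def)
  have f_stn: "\<forall>a\<in>?S. l1_norm (l1_star st a) = l1_norm a" by (auto simp: nrm_st)
  show ?thesis unfolding unital_banach_star_algebra_def
    by (intro conjI)
       (fact f_zero f_one f_addmul f_sc f_st f_aassoc f_acomm f_a0 f_neg f_sc1 f_scm f_scadd f_scdist
          f_nrm f_tri f_nsc f_complete f_massoc f_dl f_dr f_scmul f_nmul f_unit f_n1 f_stadd f_stsc
          f_stmul f_stst f_stn)+
qed

end


theorem theorem4p3: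
  fixes sc :: "complex \<Rightarrow> 'a::{real_normed_algebra_1,banach} \<Rightarrow> 'a"
    and st :: "'a \<Rightarrow> 'a"
    and \<alpha> :: "'g::linordered_ab_group_add \<Rightarrow> 'a \<Rightarrow> 'a"
    and L :: "'g \<Rightarrow> 'a \<Rightarrow> 'a"
  assumes "cstar_algebra sc st"
    and "endo_semigroup sc st \<alpha>"
    and "complete_transfer_action sc st \<alpha> L"
  shows "unital_banach_star_algebra (l1_set \<alpha>) l1_add l1_zero (l1_scale sc)
           (l1_mult \<alpha> L) (l1_star st) l1_norm l1_unit"
  by (rule l1ctx.main[OF l1ctx.intro[OF assms]])

end
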